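(* Suppose Assumptions 1–5 hold. For each $\alpha\in A$ and $T$, let $(\hat\beta_{T\alpha q},\hat\pi_{T\alpha q},\hat\varpi_{T\alpha q})\in B\times\Pi_\alpha$ be such that $\hat{\boldsymbol\lambda}_{T\alpha q}:=T^{1/2}\boldsymbol\theta(\alpha,\hat\beta_{T\alpha q},\hat\pi_{T\alpha q},\hat\varpi_{T\alpha q})$ satisfies $$(\hat{\boldsymbol\lambda}_{T\alpha q}-Z_{T\alpha})'\mathcal I_\alpha(\hat{\boldsymbol\lambda}_{T\alpha q}-Z_{T\alpha})=\inf_{\boldsymbol\lambda\in\Theta_{\alpha,T}}\{(\boldsymbol\lambda-Z_{T\alpha})'\mathcal I_\alpha(\boldsymbol\lambda-Z_{T\alpha})\}+o_{p\alpha}(1).$$ Then $$L^\pi_T(\alpha,\hat\beta_{T\alpha},\hat\pi_{T\alpha},\hat\varpi_{T\alpha})-L^\pi_T(\alpha,\beta^*,\pi^*,0)=\tfrac12Z_{T\alpha}'\mathcal I_\alpha Z_{T\alpha}-\tfrac12(\hat{\boldsymbol\lambda}_{T\alpha q}-Z_{T\alpha})'\mathcal I_\alpha(\hat{\boldsymbol\lambda}_{T\alpha q}-Z_{T\alpha})+o_{p\alpha}(1).$$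
   Context: Setting. Fix an integer $p\ge1$. $\{y_t\}$ is a real-valued time series observed for $t=-p+1,\dots,T$; write $\boldsymbol y_{t-1}=(y_{t-1},\dots,y_{t-p})$ and $\mathcal F_t=\sigma(y_s,\ s\le t)$. For $\tilde\phi=(\tilde\phi_0,\tilde\phi_1,\dots,\tilde\phi_p,\tilde\sigma^2)\in\mathbb R^{p+1}\times(0,\infty)$ let $f_t(\tilde\phi)=\tilde\sigma^{-1}\mathfrak N\big((y_t-\tilde\phi_0-\sum_{i=1}^p\tilde\phi_iy_{t-i})/\tilde\sigma\big)$ with $\mathfrak N(u)=(2\pi)^{-1/2}e^{-u^2/2}$; $\nabla f_t$ denotes the gradient with respect to $\tilde\phi$. Integers $q_1\ge0$, $q_2\ge1$ with $q_1+q_2=p+2$ and a known $(p+2)\times(p+2)$ permutation matrix $P$ are fixed; for $\beta\in\mathbb R^{q_1},\phi\in\mathbb R^{q_2}$ write $f_t(\beta,\phi)=f_t(P^{-1}(\beta,\phi))$. Given a mixing weight $\alpha_t(\alpha,\beta,\phi,\varphi)$ depending on an additional parameter $\alpha$, the two-regime mixture autoregressive log-likelihood is $L_T(\alpha,\beta,\phi,\varphi)=\sum_{t=1}^T\log[\alpha_tf_t(\beta,\phi)+(1-\alpha_t)f_t(\beta,\varphi)]$; the null (linear AR) log-likelihood is $L^0_T(\tilde\phi)=\sum_{t=1}^T\log f_t(\tilde\phi)$. Let $\hat{\tilde\phi}_T$ satisfy $L^0_T(\hat{\tilde\phi}_T)=\sup_{\tilde\phi\in\tilde\Phi}L^0_T(\tilde\phi)+o_p(1)$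 and $\hat{\tilde\phi}_T=\tilde\phi^*+o_p(1)$. Define $LR_T(\alpha)=2[\sup_{(\beta,\phi,\varphi)\in B\times\Phi\times\Phi}L_T(\alpha,\beta,\phi,\varphi)-\sup_{\tilde\phi\in\tilde\Phi}L^0_T(\tilde\phi)]$ and $LR_T=\sup_{\alpha\in A}LR_T(\alpha)$. Notation. For random quantities $X_{T\alpha}$ indexed by $\alpha\in A$, $X_{T\alpha}=o_{p\alpha}(1)$ (resp. $O_{p\alpha}(1)$) means $\sup_{\alpha\in A}\|X_{T\alpha}\|=o_p(1)$ (resp. $O_p(1)$). $\mathcal B(A,\mathbb R^k)$ (resp. $\mathcal C(A,\mathbb R^k)$) is the space of bounded (resp. continuous) $\mathbb R^k$-valued functions on $A$ with the uniform metric; $\Rightarrow$ denotes weak convergence of processes in such spaces. A set $\Lambda\subset\mathbb R^r$ is a cone if $\lambda\in\Lambda$ implies $a\lambda\in\Lambda$ for all real $a>0$. A collection $\{\Gamma_\alpha,\alpha\in A\}$ of subsets of $\mathbb R^r$ is locally uniformly equal to $\Lambda\subset\mathbb R^r$ if there is $\delta>0$ with $\Gamma_\alpha\cap(-\delta,\delta)^r=\Lambda\cap(-\delta,\delta)^r$ for all $\alpha\in A$. $\lambda_{\min},\lambda_{\max}$ denote smallest/largest eigenvalues. Assumption 1. (i) $y_t=\tilde\phi^*_0+\sum_{i=1}^p\tilde\phi^*_iy_{t-i}+\tilde\sigma^*\varepsilon_t$ is a stationary linear Gaussian AR($p$) process, $\varepsilon_t$ i.i.d. $N(0,1)$ with $\varepsilon_t$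 independent of $\{y_{t-j},j>0\}$, where $\tilde\phi^*$ is an interior point of a compact set $\tilde\Phi\subset\{\tilde\phi:\tilde\phi_0\in\mathbb R,\ 1-\sum_{i=1}^p\tilde\phi_iz^i\ne0\text{ for }|z|\le1,\ \tilde\sigma^2\in(0,\infty)\}$. (ii) The parameter space of $(\alpha,\beta,\phi,\varphi)$ is $A\times B\times\Phi\times\Phi$ with $A\subset\mathbb R^a$ compact and $B\subset\mathbb R^{q_1}$, $\Phi\subset\mathbb R^{q_2}$ compact such that $(\beta,\phi)\in B\times\Phi$ iff $P^{-1}(\beta,\phi)\in\tilde\Phi$; write $(\beta^*,\phi^* )=P\tilde\phi^*$. (iii) For all $t$ and all parameter values, $\alpha_t(\alpha,\beta,\phi,\varphi)$ is $\sigma(\boldsymbol y_{t-1})$-measurable and lies in $(0,1)$. Assumption 2. For each $\alpha\in A$, estimators $(\hat\beta_{T\alpha},\hat\phi_{T\alpha},\hat\varphi_{T\alpha})\in B\times\Phi\times\Phi$ satisfy (i) $L_T(\alpha,\hat\beta_{T\alpha},\hat\phi_{T\alpha},\hat\varphi_{T\alpha})=\sup_{(\beta,\phi,\varphi)\in B\times\Phi\times\Phi}L_T(\alpha,\beta,\phi,\varphi)+o_{p\alpha}(1)$ and (ii) $(\hat\beta_{T\alpha},\hat\phi_{T\alpha},\hat\varphi_{T\alpha})=(\beta^*,\phi^*,\phi^* )+o_{p\alpha}(1)$. Assumption 3. (i) For every $\alpha\in A$ the map $(\pi,\varpi)=\boldsymbol\pi_\alpha(\phi,\varphi)$ from $\Phi\times\Phi$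 onto $\Pi_\alpha:=\boldsymbol\pi_\alpha(\Phi\times\Phi)\subset\mathbb R^{2q_2}$ is one-to-one with $\boldsymbol\pi_\alpha$ and $\boldsymbol\pi_\alpha^{-1}$ continuous. (ii) $\boldsymbol\pi_\alpha(\{(\phi,\phi):\phi\in\Phi\})=\Phi\times\{0\}$ and $\boldsymbol\pi_\alpha(\phi^*,\phi^* )=(\pi^*,0)$ with $\pi^*:=\phi^*$. (iii) $(\hat\beta_{T\alpha},\hat\pi_{T\alpha},\hat\varpi_{T\alpha})=(\beta^*,\pi^*,0)+o_{p\alpha}(1)$, where $(\hat\pi_{T\alpha},\hat\varpi_{T\alpha})=\boldsymbol\pi_\alpha(\hat\phi_{T\alpha},\hat\varphi_{T\alpha})$. The reparameterized log-likelihood is $L^\pi_T(\alpha,\beta,\pi,\varpi)=L_T(\alpha,\beta,\boldsymbol\pi_\alpha^{-1}(\pi,\varpi))$. Assumption 4. For some integer $k\ge2$ and every $\alpha\in A$, $\alpha_t(\alpha,\cdot)$ and $\boldsymbol\pi^{-1}_\alpha$ are $k$ times continuously differentiable on the interiors of $B\times\Phi\times\Phi$ and $\Pi_\alpha$, respectively. Assumption 5. For each $\alpha\in A$ and $(\beta,\pi,\varpi)\in B\times\Pi_\alpha$, with $\boldsymbol\theta=\boldsymbol\theta(\alpha,\beta,\pi,\varpi)$, $L^\pi_T(\alpha,\beta,\pi,\varpi)-L^\pi_T(\alpha,\beta^*,\pi^*,0)=(T^{-1/2}S_{T\alpha})'[T^{1/2}\boldsymbol\theta]-\tfrac12[T^{1/2}\boldsymbol\theta]'\mathcal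 I_\alpha[T^{1/2}\boldsymbol\theta]+R_T(\alpha,\beta,\pi,\varpi)$, where: (i) for each $\alpha$, $\boldsymbol\theta(\alpha,\cdot)$ maps $B\times\Pi_\alpha$ onto $\Theta_\alpha\subset\mathbb R^r$, with (a) $\boldsymbol\theta(\alpha,\beta^*,\pi^*,0)=0$ and (b) for every $\epsilon>0$ there is $\delta_\epsilon>0$ with $\inf_{\alpha\in A}\inf_{(\beta,\pi,\varpi)\in B\times\Pi_\alpha:\|(\beta,\pi,\varpi)-(\beta^*,\pi^*,0)\|\ge\epsilon}\|\boldsymbol\theta(\alpha,\beta,\pi,\varpi)\|\ge\delta_\epsilon$; (ii) $S_{T\alpha}=\sum_{t=1}^Ts_{t\alpha}$ is an $\mathbb R^r$-valued $\mathcal F_T$-measurable process indexed by $\alpha\in A$, not depending on $(\beta,\pi,\varpi)$, with sample paths continuous in $\alpha$, and $T^{-1/2}S_{T\bullet}\Rightarrow S_\bullet$ for a mean-zero $\mathbb R^r$-valued Gaussian process $\{S_\alpha:\alpha\in A\}$ with a.s. continuous sample paths and $E[S_\alpha S_\alpha']=E[s_{t\alpha}s_{t\alpha}']=\mathcal I_\alpha$; (iii) $\mathcal I_\alpha$ is a nonrandom symmetric $r\times r$ matrix not depending on $(\beta,\pi,\varpi)$, continuous in $\alpha$, with $0<\inf_{\alpha\in A}\lambda_{\min}(\mathcal I_\alpha)$ and $\sup_{\alpha\in A}\lambda_{\max}(\mathcal I_\alpha)<\infty$; (iv) for every nonrandom sequence of positive scalars $\gamma_T\to0$, $\sup_{(\beta,\pi,\varpi)\in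 B\times\Pi_\alpha:\|(\beta,\pi,\varpi)-(\beta^*,\pi^*,0)\|\le\gamma_T}|R_T(\alpha,\beta,\pi,\varpi)|/(1+\|T^{1/2}\boldsymbol\theta(\alpha,\beta,\pi,\varpi)\|)^2=o_{p\alpha}(1)$. Assumption 6. $\{\Theta_\alpha,\alpha\in A\}$ is locally uniformly equal to a cone $\Lambda\subset\mathbb R^r$. Assumption 7. With $q_\theta=q_1+q_2$ and $q_\vartheta=r-q_\theta$, $\Lambda=\mathbb R^{q_\theta}\times\Lambda_\vartheta$ for a cone $\Lambda_\vartheta\subset\mathbb R^{q_\vartheta}$. Assumption 8. Partitioning $S_{T\alpha}=(S_{T\theta\alpha},S_{T\vartheta\alpha})$ with $S_{T\theta\alpha}$ of dimension $q_\theta$, $S_{T\theta\alpha}=S^0_T:=\sum_{t=1}^T\nabla f_t(\tilde\phi^* )/f_t(\tilde\phi^* )$ for all $\alpha$. Let $\mathcal I^0=E[(\nabla f_t(\tilde\phi^* )/f_t(\tilde\phi^* ))(\nabla f_t(\tilde\phi^* )/f_t(\tilde\phi^* ))']$. Further notation. $Z_{T\alpha}=\mathcal I_\alpha^{-1}T^{-1/2}S_{T\alpha}$, $Z_\alpha=\mathcal I_\alpha^{-1}S_\alpha$. Partition $S_\alpha=(S_{\theta\alpha},S_{\vartheta\alpha})$, $Z_\alpha=(Z_{\theta\alpha},Z_{\vartheta\alpha})$, $\boldsymbol\lambda=(\boldsymbol\lambda_\theta,\boldsymbol\lambda_\vartheta)$ and $\mathcal I_\alpha$ into blocks $\mathcal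 I_{\theta\theta\alpha},\mathcal I_{\theta\vartheta\alpha},\mathcal I_{\vartheta\theta\alpha},\mathcal I_{\vartheta\vartheta\alpha}$ conformably with dimensions $q_\theta,q_\vartheta$; $(\mathcal I_\alpha^{-1})_{\vartheta\vartheta}$ is the bottom-right $q_\vartheta\times q_\vartheta$ block of $\mathcal I_\alpha^{-1}$. $\Theta_{\alpha,T}=\{T^{1/2}\boldsymbol\theta:\boldsymbol\theta\in\Theta_\alpha\}$. *)

theory Defs
  imports "HOL-Probability.Probability"
begin

text \<open>A vector of R^n is encoded as a function nat => real that vanishes at
all indices >= n.  Euclidean norm, concatenation and relative interior are
defined with respect to this encoding.\<close>

definition vec :: "nat \<Rightarrow> (nat \<Rightarrow> real) set" where
  "vec n = {v. \<forall>i\<ge>n. v i = 0}"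

definition vnorm :: "nat \<Rightarrow> (nat \<Rightarrow> real) \<Rightarrow> real" where
  "vnorm n v = sqrt (\<Sum>i<n. (v i)\<^sup>2)"

definition vzero :: "nat \<Rightarrow> real" where
  "vzero = (\<lambda>_. 0)"

definition vcat :: "nat \<Rightarrow> (nat \<Rightarrow> real) \<Rightarrow> (nat \<Rightarrow> real) \<Rightarrow> (nat \<Rightarrow> real)" where
  "vcat m a b = (\<lambda>i. if i < m then a i else b (i - m))"

definition vtake :: "nat \<Rightarrow> (nat \<Rightarrow> real) \<Rightarrow> (nat \<Rightarrow> real)" where
  "vtake m v = (\<lambda>i. if i < m then v i else 0)"

definition vdrop :: "nat \<Rightarrow> (nat \<Rightarrow> real) \<Rightarrow> (nat \<Rightarrow> real)" where
  "vdrop m v = (\<lambda>i. v (i + m))"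

definition vinterior :: "nat \<Rightarrow> (nat \<Rightarrow> real) set \<Rightarrow> (nat \<Rightarrow> real) set" where
  "vinterior n S = {x \<in> S \<inter> vec n. \<exists>e>0. \<forall>y\<in>vec n. vnorm n (\<lambda>i. y i - x i) < e \<longrightarrow> y \<in> S}"

definition dist3 :: "nat \<Rightarrow> nat \<Rightarrow> (nat \<Rightarrow> real) \<Rightarrow> (nat \<Rightarrow> real) \<Rightarrow> (nat \<Rightarrow> real)
    \<Rightarrow> (nat \<Rightarrow> real) \<Rightarrow> (nat \<Rightarrow> real) \<Rightarrow> (nat \<Rightarrow> real) \<Rightarrow> real" where
  "dist3 q1 q2 b p v b' p' v' =
     sqrt ((vnorm q1 (\<lambda>i. b i - b' i))\<^sup>2 + (vnorm q2 (\<lambda>i. p i - p' i))\<^sup>2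
           + (vnorm q2 (\<lambda>i. v i - v' i))\<^sup>2)"

text \<open>k times continuously differentiable on an (open) subset U of R^n:
all iterated partial derivatives of order <= k exist on U and are continuous.
(On subsets of vec n the product topology of nat => real is the Euclidean one.)\<close>
definition Ck_on :: "nat \<Rightarrow> nat \<Rightarrow> (nat \<Rightarrow> real) set \<Rightarrow> ((nat \<Rightarrow> real) \<Rightarrow> real) \<Rightarrow> bool" where
  "Ck_on k n U g \<longleftrightarrow> (\<exists>D :: nat list \<Rightarrow> (nat \<Rightarrow> real) \<Rightarrow> real.
      (\<forall>x\<in>U. D [] x = g x) \<and>
      (\<forall>js i x. length js < k \<and> set js \<subseteq> {..<n} \<and> i < n \<and> x \<in> U \<longrightarrow>
          ((\<lambda>h. D js (\<lambda>j. x j + (if j = i then h else 0))) has_real_derivative D (i # js) x) (at 0)) \<and>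
      (\<forall>js. length js \<le> k \<and> set js \<subseteq> {..<n} \<longrightarrow> continuous_on U (D js)))"

definition eigvals :: "real^'r^'r \<Rightarrow> real set" where
  "eigvals M = {e. \<exists>v. v \<noteq> 0 \<and> M *v v = e *\<^sub>R v}"

definition lam_min :: "real^'r^'r \<Rightarrow> real" where
  "lam_min M = Inf (eigvals M)"

definition lam_max :: "real^'r^'r \<Rightarrow> real" where
  "lam_max M = Sup (eigvals M)"

definition qform :: "real^'r^'r \<Rightarrow> real^'r \<Rightarrow> real" where
  "qform M v = v \<bullet> (M *v v)"

text \<open>Outer-probability version of "the events E T e have vanishing probability":
for all e, d > 0, eventually E T e is contained in a measurable set of probability < d.\<close>
definition vanish_p :: "'w measure \<Rightarrow> (nat \<Rightarrow> real \<Rightarrow> 'w set) \<Rightarrow> bool" where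
  "vanish_p M E \<longleftrightarrow> (\<forall>e>0. \<forall>d>0. eventually
      (\<lambda>T. \<exists>F\<in>sets M. measure M F < d \<and> E T e \<inter> space M \<subseteq> F) sequentially)"

text \<open>X_{T alpha} = o_{p alpha}(1): sup over alpha in A of |X_{T alpha}| is o_p(1).\<close>
definition op_unif :: "'w measure \<Rightarrow> 'a set \<Rightarrow> (nat \<Rightarrow> 'a \<Rightarrow> 'w \<Rightarrow> real) \<Rightarrow> bool" where
  "op_unif M A X \<longleftrightarrow> vanish_p M (\<lambda>T e. {\<omega>. \<exists>a\<in>A. \<bar>X T a \<omega>\<bar> > e})"

text \<open>Weak convergence of the processes X_T (on M) to Y (on N) in the space of
bounded functions on A with the uniform metric.\<close>
definition weak_conv_unif ::
  "'a set \<Rightarrow> 'w measure \<Rightarrow> (nat \<Rightarrow> 'a \<Rightarrow> 'w \<Rightarrow> 'b::real_normed_vector) \<Rightarrow> 'v measure \<Rightarrow> ('a \<Rightarrow> 'v \<Rightarrow> 'b) \<Rightarrow> bool" where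
  "weak_conv_unif A M X N Y \<longleftrightarrow> (\<forall>h :: ('a \<Rightarrow> 'b) \<Rightarrow> real.
      ((\<exists>K. \<forall>f. \<bar>h f\<bar> \<le> K) \<and>
       (\<forall>f g. (\<forall>a\<in>A. f a = g a) \<longrightarrow> h f = h g) \<and>
       (\<forall>f. (\<exists>K. \<forall>a\<in>A. norm (f a) \<le> K) \<longrightarrow>
          (\<forall>e>0. \<exists>d>0. \<forall>g. (\<exists>K. \<forall>a\<in>A. norm (g a) \<le> K) \<longrightarrow>
              (\<forall>a\<in>A. norm (f a - g a) < d) \<longrightarrow> \<bar>h f - h g\<bar> < e)))
      \<longrightarrow> ((\<lambda>T. \<integral>\<omega>. h (\<lambda>a. X T a \<omega>) \<partial>M) \<longlonglongrightarrow> (\<integral>\<omega>. h (\<lambda>a. Y a \<omega>) \<partial>N)))"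

definition centered_normal :: "'v measure \<Rightarrow> ('v \<Rightarrow> real) \<Rightarrow> bool" where
  "centered_normal N X \<longleftrightarrow> X \<in> borel_measurable N \<and>
     ((AE \<omega> in N. X \<omega> = 0) \<or>
      (\<exists>\<sigma>>0. distributed N lborel X (\<lambda>x. ennreal (normal_density 0 \<sigma> x))))"

definition gaussian_process :: "'a set \<Rightarrow> 'v measure \<Rightarrow> ('a \<Rightarrow> 'v \<Rightarrow> real^'r) \<Rightarrow> bool" where
  "gaussian_process A N Y \<longleftrightarrow> (\<forall>F (c :: 'a \<Rightarrow> real^'r). finite F \<and> F \<subseteq> A \<longrightarrow>
      centered_normal N (\<lambda>\<omega>. \<Sum>a\<in>F. c a \<bullet> Y a \<omega>))"

definition stationary_proc :: "'w measure \<Rightarrow> (int \<Rightarrow> 'w \<Rightarrow> real) \<Rightarrow> bool" where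
  "stationary_proc M y \<longleftrightarrow> (\<forall>k J. finite J \<longrightarrow>
      distr M (PiM J (\<lambda>_. borel)) (\<lambda>\<omega>. \<lambda>j\<in>J. y (j + k) \<omega>)
    = distr M (PiM J (\<lambda>_. borel)) (\<lambda>\<omega>. \<lambda>j\<in>J. y j \<omega>))"

definition past_sigma :: "'w measure \<Rightarrow> (int \<Rightarrow> 'w \<Rightarrow> real) \<Rightarrow> int \<Rightarrow> 'w measure" where
  "past_sigma M y T = sigma (space M) {y s -` X \<inter> space M | s X. s \<le> T \<and> X \<in> sets borel}"

definition lag_sigma :: "'w measure \<Rightarrow> (int \<Rightarrow> 'w \<Rightarrow> real) \<Rightarrow> nat \<Rightarrow> int \<Rightarrow> 'w measure" where
  "lag_sigma M y p t = sigma (space M) {y (t - int i) -` X \<inter> space M | i X. i \<in> {1..p} \<and> X \<in> sets borel}"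

definition ar_root_cond :: "nat \<Rightarrow> (nat \<Rightarrow> real) \<Rightarrow> bool" where
  "ar_root_cond p ph \<longleftrightarrow>
     (\<forall>z::complex. cmod z \<le> 1 \<longrightarrow> 1 - (\<Sum>i=1..p. complex_of_real (ph i) * z ^ i) \<noteq> 0)"

definition Pmap :: "(nat \<Rightarrow> nat) \<Rightarrow> (nat \<Rightarrow> real) \<Rightarrow> (nat \<Rightarrow> real)" where
  "Pmap sg v = (\<lambda>i. v (sg i))"

definition Pinv :: "(nat \<Rightarrow> nat) \<Rightarrow> (nat \<Rightarrow> real) \<Rightarrow> (nat \<Rightarrow> real)" where
  "Pinv sg w = (\<lambda>i. w (inv sg i))"

text \<open>f_t(phi~) for a parameter vector phi~ = (phi_0,...,phi_p,sigma^2)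
(indices 0..p+1) and a sample path yy.\<close>
definition ftd :: "nat \<Rightarrow> (int \<Rightarrow> real) \<Rightarrow> int \<Rightarrow> (nat \<Rightarrow> real) \<Rightarrow> real" where
  "ftd p yy t ph = (let s = sqrt (ph (Suc p)) in
      std_normal_density ((yy t - ph 0 - (\<Sum>i=1..p. ph i * yy (t - int i))) / s) / s)"

definition LT :: "nat \<Rightarrow> (nat \<Rightarrow> nat) \<Rightarrow> nat \<Rightarrow> (int \<Rightarrow> 'w \<Rightarrow> real)
    \<Rightarrow> (int \<Rightarrow> 'a \<Rightarrow> (nat \<Rightarrow> real) \<Rightarrow> (nat \<Rightarrow> real) \<Rightarrow> (nat \<Rightarrow> real) \<Rightarrow> 'w \<Rightarrow> real)
    \<Rightarrow> nat \<Rightarrow> 'a \<Rightarrow> (nat \<Rightarrow> real) \<Rightarrow> (nat \<Rightarrow> real) \<Rightarrow> (nat \<Rightarrow> real) \<Rightarrow> 'w \<Rightarrow> real" where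
  "LT p sg q1 y mw T a b ph vp \<omega> =
     (\<Sum>t\<in>{1..int T}.
        ln (mw t a b ph vp \<omega> * ftd p (\<lambda>s. y s \<omega>) t (Pinv sg (vcat q1 b ph))
            + (1 - mw t a b ph vp \<omega>) * ftd p (\<lambda>s. y s \<omega>) t (Pinv sg (vcat q1 b vp))))"

definition LpiT :: "nat \<Rightarrow> (nat \<Rightarrow> nat) \<Rightarrow> nat \<Rightarrow> (int \<Rightarrow> 'w \<Rightarrow> real)
    \<Rightarrow> (int \<Rightarrow> 'a \<Rightarrow> (nat \<Rightarrow> real) \<Rightarrow> (nat \<Rightarrow> real) \<Rightarrow> (nat \<Rightarrow> real) \<Rightarrow> 'w \<Rightarrow> real)
    \<Rightarrow> ('a \<Rightarrow> (nat \<Rightarrow> real) \<times> (nat \<Rightarrow> real) \<Rightarrow> (nat \<Rightarrow> real) \<times> (nat \<Rightarrow> real))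
    \<Rightarrow> nat \<Rightarrow> 'a \<Rightarrow> (nat \<Rightarrow> real) \<Rightarrow> (nat \<Rightarrow> real) \<Rightarrow> (nat \<Rightarrow> real) \<Rightarrow> 'w \<Rightarrow> real" where
  "LpiT p sg q1 y mw piinv T a b pp vv \<omega> =
     LT p sg q1 y mw T a b (fst (piinv a (pp, vv))) (snd (piinv a (pp, vv))) \<omega>"

definition bstar :: "(nat \<Rightarrow> nat) \<Rightarrow> nat \<Rightarrow> (nat \<Rightarrow> real) \<Rightarrow> (nat \<Rightarrow> real)" where
  "bstar sg q1 phs = vtake q1 (Pmap sg phs)"

definition phstar :: "(nat \<Rightarrow> nat) \<Rightarrow> nat \<Rightarrow> (nat \<Rightarrow> real) \<Rightarrow> (nat \<Rightarrow> real)" where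
  "phstar sg q1 phs = vdrop q1 (Pmap sg phs)"

definition Setting :: "nat \<Rightarrow> nat \<Rightarrow> nat \<Rightarrow> (nat \<Rightarrow> nat) \<Rightarrow> bool" where
  "Setting p q1 q2 sg \<longleftrightarrow> p \<ge> 1 \<and> q2 \<ge> 1 \<and> q1 + q2 = p + 2 \<and> sg permutes {..<p+2}"

definition Assumption1 :: "'w measure \<Rightarrow> nat \<Rightarrow> nat \<Rightarrow> nat \<Rightarrow> (nat \<Rightarrow> nat)
    \<Rightarrow> (int \<Rightarrow> 'w \<Rightarrow> real) \<Rightarrow> (int \<Rightarrow> 'w \<Rightarrow> real) \<Rightarrow> (nat \<Rightarrow> real) \<Rightarrow> (nat \<Rightarrow> real) set
    \<Rightarrow> 'a::euclidean_space set \<Rightarrow> (nat \<Rightarrow> real) set \<Rightarrow> (nat \<Rightarrow> real) set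
    \<Rightarrow> (int \<Rightarrow> 'a \<Rightarrow> (nat \<Rightarrow> real) \<Rightarrow> (nat \<Rightarrow> real) \<Rightarrow> (nat \<Rightarrow> real) \<Rightarrow> 'w \<Rightarrow> real) \<Rightarrow> bool" where
  "Assumption1 M p q1 q2 sg y eps phs PhiT A B Phi mw \<longleftrightarrow>
     \<comment> \<open>(i)\<close>
     prob_space M \<and>
     (\<forall>t. y t \<in> borel_measurable M) \<and>
     (\<forall>t. distributed M lborel (eps t) (\<lambda>x. ennreal (std_normal_density x))) \<and>
     prob_space.indep_vars M (\<lambda>_. borel) eps UNIV \<and>
     (\<forall>t. prob_space.indep_set M
        (sigma_sets (space M) {eps t -` X \<inter> space M | X. X \<in> sets borel})
        (sigma_sets (space M) {y j -` X \<inter> space M | j X. j < t \<and> X \<in> sets borel})) \<and>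
     (\<forall>t. \<forall>\<omega>\<in>space M. y t \<omega> = phs 0 + (\<Sum>i=1..p. phs i * y (t - int i) \<omega>) + sqrt (phs (Suc p)) * eps t \<omega>) \<and>
     stationary_proc M y \<and>
     PhiT \<subseteq> vec (p + 2) \<and> compact PhiT \<and>
     (\<forall>ph\<in>PhiT. ar_root_cond p ph \<and> ph (Suc p) > 0) \<and>
     phs \<in> vinterior (p + 2) PhiT \<and>
     \<comment> \<open>(ii)\<close>
     compact A \<and> B \<subseteq> vec q1 \<and> Phi \<subseteq> vec q2 \<and> compact B \<and> compact Phi \<and>
     (\<forall>b\<in>vec q1. \<forall>ph\<in>vec q2. (b \<in> B \<and> ph \<in> Phi) \<longleftrightarrow> Pinv sg (vcat q1 b ph) \<in> PhiT) \<and>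
     \<comment> \<open>(iii)\<close>
     (\<forall>t. \<forall>a\<in>A. \<forall>b\<in>B. \<forall>ph\<in>Phi. \<forall>vp\<in>Phi.
        mw t a b ph vp \<in> borel_measurable (lag_sigma M y p t) \<and>
        (\<forall>\<omega>\<in>space M. 0 < mw t a b ph vp \<omega> \<and> mw t a b ph vp \<omega> < 1))"

definition Assumption2 :: "'w measure \<Rightarrow> nat \<Rightarrow> nat \<Rightarrow> nat \<Rightarrow> (nat \<Rightarrow> nat)
    \<Rightarrow> (int \<Rightarrow> 'w \<Rightarrow> real) \<Rightarrow> (nat \<Rightarrow> real)
    \<Rightarrow> 'a set \<Rightarrow> (nat \<Rightarrow> real) set \<Rightarrow> (nat \<Rightarrow> real) set
    \<Rightarrow> (int \<Rightarrow> 'a \<Rightarrow> (nat \<Rightarrow> real) \<Rightarrow> (nat \<Rightarrow> real) \<Rightarrow> (nat \<Rightarrow> real) \<Rightarrow> 'w \<Rightarrow> real)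
    \<Rightarrow> (nat \<Rightarrow> 'a \<Rightarrow> 'w \<Rightarrow> (nat \<Rightarrow> real)) \<Rightarrow> (nat \<Rightarrow> 'a \<Rightarrow> 'w \<Rightarrow> (nat \<Rightarrow> real))
    \<Rightarrow> (nat \<Rightarrow> 'a \<Rightarrow> 'w \<Rightarrow> (nat \<Rightarrow> real)) \<Rightarrow> bool" where
  "Assumption2 M p q1 q2 sg y phs A B Phi mw bh phh vph \<longleftrightarrow>
     (\<forall>T. \<forall>a\<in>A. \<forall>\<omega>\<in>space M. bh T a \<omega> \<in> B \<and> phh T a \<omega> \<in> Phi \<and> vph T a \<omega> \<in> Phi) \<and>
     op_unif M A (\<lambda>T a \<omega>. LT p sg q1 y mw T a (bh T a \<omega>) (phh T a \<omega>) (vph T a \<omega>) \<omega>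
                        - (SUP x\<in>B \<times> Phi \<times> Phi. LT p sg q1 y mw T a (fst x) (fst (snd x)) (snd (snd x)) \<omega>)) \<and>
     op_unif M A (\<lambda>T a \<omega>. dist3 q1 q2 (bh T a \<omega>) (phh T a \<omega>) (vph T a \<omega>)
                        (bstar sg q1 phs) (phstar sg q1 phs) (phstar sg q1 phs))"

definition Assumption3 :: "'w measure \<Rightarrow> nat \<Rightarrow> nat \<Rightarrow> (nat \<Rightarrow> nat) \<Rightarrow> (nat \<Rightarrow> real)
    \<Rightarrow> 'a set \<Rightarrow> (nat \<Rightarrow> real) set
    \<Rightarrow> ('a \<Rightarrow> (nat \<Rightarrow> real) \<times> (nat \<Rightarrow> real) \<Rightarrow> (nat \<Rightarrow> real) \<times> (nat \<Rightarrow> real))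
    \<Rightarrow> ('a \<Rightarrow> (nat \<Rightarrow> real) \<times> (nat \<Rightarrow> real) \<Rightarrow> (nat \<Rightarrow> real) \<times> (nat \<Rightarrow> real))
    \<Rightarrow> (nat \<Rightarrow> 'a \<Rightarrow> 'w \<Rightarrow> (nat \<Rightarrow> real)) \<Rightarrow> (nat \<Rightarrow> 'a \<Rightarrow> 'w \<Rightarrow> (nat \<Rightarrow> real))
    \<Rightarrow> (nat \<Rightarrow> 'a \<Rightarrow> 'w \<Rightarrow> (nat \<Rightarrow> real)) \<Rightarrow> bool" where
  "Assumption3 M q1 q2 sg phs A Phi pimap piinv bh phh vph \<longleftrightarrow>
     (\<forall>a\<in>A. homeomorphism (Phi \<times> Phi) (pimap a ` (Phi \<times> Phi)) (pimap a) (piinv a) \<and>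
             pimap a ` (Phi \<times> Phi) \<subseteq> vec q2 \<times> vec q2 \<and>
             pimap a ` {(ph, ph) | ph. ph \<in> Phi} = Phi \<times> {vzero} \<and>
             pimap a (phstar sg q1 phs, phstar sg q1 phs) = (phstar sg q1 phs, vzero)) \<and>
     op_unif M A (\<lambda>T a \<omega>. dist3 q1 q2 (bh T a \<omega>)
                          (fst (pimap a (phh T a \<omega>, vph T a \<omega>))) (snd (pimap a (phh T a \<omega>, vph T a \<omega>)))
                          (bstar sg q1 phs) (phstar sg q1 phs) vzero)"

definition Assumption4 :: "'w measure \<Rightarrow> nat \<Rightarrow> nat \<Rightarrow> 'a set \<Rightarrow> (nat \<Rightarrow> real) set \<Rightarrow> (nat \<Rightarrow> real) set
    \<Rightarrow> (int \<Rightarrow> 'a \<Rightarrow> (nat \<Rightarrow> real) \<Rightarrow> (nat \<Rightarrow> real) \<Rightarrow> (nat \<Rightarrow> real) \<Rightarrow> 'w \<Rightarrow> real)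
    \<Rightarrow> ('a \<Rightarrow> (nat \<Rightarrow> real) \<times> (nat \<Rightarrow> real) \<Rightarrow> (nat \<Rightarrow> real) \<times> (nat \<Rightarrow> real))
    \<Rightarrow> ('a \<Rightarrow> (nat \<Rightarrow> real) \<times> (nat \<Rightarrow> real) \<Rightarrow> (nat \<Rightarrow> real) \<times> (nat \<Rightarrow> real)) \<Rightarrow> bool" where
  "Assumption4 M q1 q2 A B Phi mw pimap piinv \<longleftrightarrow>
     (\<exists>k::nat. k \<ge> 2 \<and> (\<forall>a\<in>A.
        (\<forall>t. \<forall>\<omega>\<in>space M.
           Ck_on k (q1 + 2 * q2)
             (vinterior (q1 + 2 * q2) ((\<lambda>(b, ph, vp). vcat q1 b (vcat q2 ph vp)) ` (B \<times> Phi \<times> Phi)))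
             (\<lambda>v. mw t a (vtake q1 v) (vtake q2 (vdrop q1 v)) (vdrop (q1 + q2) v) \<omega>)) \<and>
        (\<forall>j < 2 * q2.
           Ck_on k (2 * q2)
             (vinterior (2 * q2) ((\<lambda>(pp, vv). vcat q2 pp vv) ` (pimap a ` (Phi \<times> Phi))))
             (\<lambda>v. vcat q2 (fst (piinv a (vtake q2 v, vdrop q2 v))) (snd (piinv a (vtake q2 v, vdrop q2 v))) j))))"

definition ST :: "(nat \<Rightarrow> 'a \<Rightarrow> 'w \<Rightarrow> real^'r) \<Rightarrow> nat \<Rightarrow> 'a \<Rightarrow> 'w \<Rightarrow> real^'r" where
  "ST s T a \<omega> = (\<Sum>t\<in>{1..T}. s t a \<omega>)"

definition RT :: "nat \<Rightarrow> (nat \<Rightarrow> nat) \<Rightarrow> nat \<Rightarrow> (int \<Rightarrow> 'w \<Rightarrow> real)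
    \<Rightarrow> (int \<Rightarrow> 'a \<Rightarrow> (nat \<Rightarrow> real) \<Rightarrow> (nat \<Rightarrow> real) \<Rightarrow> (nat \<Rightarrow> real) \<Rightarrow> 'w \<Rightarrow> real)
    \<Rightarrow> ('a \<Rightarrow> (nat \<Rightarrow> real) \<times> (nat \<Rightarrow> real) \<Rightarrow> (nat \<Rightarrow> real) \<times> (nat \<Rightarrow> real))
    \<Rightarrow> (nat \<Rightarrow> real) \<Rightarrow> ('a \<Rightarrow> (nat \<Rightarrow> real) \<Rightarrow> (nat \<Rightarrow> real) \<Rightarrow> (nat \<Rightarrow> real) \<Rightarrow> real^'r)
    \<Rightarrow> (nat \<Rightarrow> 'a \<Rightarrow> 'w \<Rightarrow> real^'r) \<Rightarrow> ('a \<Rightarrow> real^'r^'r)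
    \<Rightarrow> nat \<Rightarrow> 'a \<Rightarrow> (nat \<Rightarrow> real) \<Rightarrow> (nat \<Rightarrow> real) \<Rightarrow> (nat \<Rightarrow> real) \<Rightarrow> 'w \<Rightarrow> real" where
  "RT p sg q1 y mw piinv phs th s I T a b pp vv \<omega> =
     LpiT p sg q1 y mw piinv T a b pp vv \<omega>
     - LpiT p sg q1 y mw piinv T a (bstar sg q1 phs) (phstar sg q1 phs) vzero \<omega>
     - (((1 / sqrt (real T)) *\<^sub>R ST s T a \<omega>) \<bullet> (sqrt (real T) *\<^sub>R th a b pp vv)
        - (1/2) * qform (I a) (sqrt (real T) *\<^sub>R th a b pp vv))"

definition Assumption5 :: "'w measure \<Rightarrow> nat \<Rightarrow> nat \<Rightarrow> nat \<Rightarrow> (nat \<Rightarrow> nat)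
    \<Rightarrow> (int \<Rightarrow> 'w \<Rightarrow> real) \<Rightarrow> (nat \<Rightarrow> real)
    \<Rightarrow> 'a::euclidean_space set \<Rightarrow> (nat \<Rightarrow> real) set \<Rightarrow> (nat \<Rightarrow> real) set
    \<Rightarrow> (int \<Rightarrow> 'a \<Rightarrow> (nat \<Rightarrow> real) \<Rightarrow> (nat \<Rightarrow> real) \<Rightarrow> (nat \<Rightarrow> real) \<Rightarrow> 'w \<Rightarrow> real)
    \<Rightarrow> ('a \<Rightarrow> (nat \<Rightarrow> real) \<times> (nat \<Rightarrow> real) \<Rightarrow> (nat \<Rightarrow> real) \<times> (nat \<Rightarrow> real))
    \<Rightarrow> ('a \<Rightarrow> (nat \<Rightarrow> real) \<times> (nat \<Rightarrow> real) \<Rightarrow> (nat \<Rightarrow> real) \<times> (nat \<Rightarrow> real))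
    \<Rightarrow> ('a \<Rightarrow> (nat \<Rightarrow> real) \<Rightarrow> (nat \<Rightarrow> real) \<Rightarrow> (nat \<Rightarrow> real) \<Rightarrow> real^'r)
    \<Rightarrow> (nat \<Rightarrow> 'a \<Rightarrow> 'w \<Rightarrow> real^'r) \<Rightarrow> 'v measure \<Rightarrow> ('a \<Rightarrow> 'v \<Rightarrow> real^'r)
    \<Rightarrow> ('a \<Rightarrow> real^'r^'r) \<Rightarrow> bool" where
  "Assumption5 M p q1 q2 sg y phs A B Phi mw pimap piinv th s N S I \<longleftrightarrow>
     \<comment> \<open>(i)\<close>
     (\<forall>a\<in>A. th a (bstar sg q1 phs) (phstar sg q1 phs) vzero = 0) \<and>
     (\<forall>e>0. \<exists>d>0. \<forall>a\<in>A. \<forall>b\<in>B. \<forall>x\<in>pimap a ` (Phi \<times> Phi).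
        dist3 q1 q2 b (fst x) (snd x) (bstar sg q1 phs) (phstar sg q1 phs) vzero \<ge> e
        \<longrightarrow> norm (th a b (fst x) (snd x)) \<ge> d) \<and>
     \<comment> \<open>(ii)\<close>
     (\<forall>T. \<forall>a\<in>A. ST s T a \<in> borel_measurable (past_sigma M y (int T))) \<and>
     (\<forall>T. \<forall>\<omega>\<in>space M. continuous_on A (\<lambda>a. ST s T a \<omega>)) \<and>
     weak_conv_unif A M (\<lambda>T a \<omega>. (1 / sqrt (real T)) *\<^sub>R ST s T a \<omega>) N S \<and>
     prob_space N \<and> gaussian_process A N S \<and>
     (AE \<omega> in N. continuous_on A (\<lambda>a. S a \<omega>)) \<and>
     (\<forall>a\<in>A. \<forall>i j. integrable N (\<lambda>\<omega>. S a \<omega> $ i * S a \<omega> $ j) \<and>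
                   (\<integral>\<omega>. S a \<omega> $ i * S a \<omega> $ j \<partial>N) = I a $ i $ j) \<and>
     (\<forall>t\<ge>1. \<forall>a\<in>A. \<forall>i j. integrable M (\<lambda>\<omega>. s t a \<omega> $ i * s t a \<omega> $ j) \<and>
                   (\<integral>\<omega>. s t a \<omega> $ i * s t a \<omega> $ j \<partial>M) = I a $ i $ j) \<and>
     \<comment> \<open>(iii)\<close>
     (\<forall>a\<in>A. transpose (I a) = I a) \<and> continuous_on A I \<and>
     (\<exists>c>0. \<forall>a\<in>A. lam_min (I a) \<ge> c) \<and> (\<exists>C. \<forall>a\<in>A. lam_max (I a) \<le> C) \<and>
     \<comment> \<open>(iv)\<close>
     (\<forall>\<gamma> :: nat \<Rightarrow> real. (\<forall>T. \<gamma> T > 0) \<and> \<gamma> \<longlonglongrightarrow> 0 \<longrightarrow>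
        vanish_p M (\<lambda>T e. {\<omega>. \<exists>a\<in>A. \<exists>b\<in>B. \<exists>x\<in>pimap a ` (Phi \<times> Phi).
            dist3 q1 q2 b (fst x) (snd x) (bstar sg q1 phs) (phstar sg q1 phs) vzero \<le> \<gamma> T \<and>
            \<bar>RT p sg q1 y mw piinv phs th s I T a b (fst x) (snd x) \<omega>\<bar>
              / (1 + norm (sqrt (real T) *\<^sub>R th a b (fst x) (snd x)))\<^sup>2 > e}))"

end

theory Submission
  imports Defs
begin

lemma qform_add_sym:
  fixes J :: "real^'r^'r"
  assumes "transpose J = J"
  shows "qform J (x + y) = qform J x + 2 * (y \<bullet> (J *v x)) + qform J y"
proof -
  have "x \<bullet> (J *v y) = y \<bullet> (J *v x)"
    by (metis assms dot_lmul_matrix inner_commute transpose_matrix_vector)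
  then show ?thesis unfolding qform_def
    by (simp add: matrix_vector_right_distrib inner_add_left inner_add_right)
qed

lemma qform_scale: "qform J (t *\<^sub>R x) = t^2 * qform J x"
  unfolding qform_def by (simp add: matrix_vector_mult_scaleR power2_eq_square)

lemma psd_kernel:
  fixes J :: "real^'r^'r"
  assumes sym: "transpose J = J" and psd: "\<And>v. qform J v \<ge> 0" and z: "qform J v0 = 0"
  shows "J *v v0 = 0"
proof -
  define w where "w = J *v v0"
  define a where "a = w \<bullet> (J *v v0)"
  define b where "b = qform J w"
  have b0: "b \<ge> 0" using psd b_def by auto
  have key: "\<And>t. 0 \<le> 2 * t * a + t^2 * b"
  proof -
    fix t
    have "0 \<le> qform J (v0 + t *\<^sub>R w)" by (rule psd)
    also have "\<dots> = 2 * t * a + t^2 * b"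
      using qform_add_sym[OF sym, of v0 "t *\<^sub>R w"] z
      by (simp add: a_def b_def qform_scale)
    finally show "0 \<le> 2 * t * a + t^2 * b" .
  qed
  have "a = 0"
  proof (rule ccontr)
    assume "a \<noteq> 0"
    define t where "t = - a / (b + 1)"
    have "0 \<le> 2 * t * a + t^2 * b" by (rule key)
    moreover have "2 * t * a + t^2 * b < 0"
    proof -
      have ts: "t * (b+1) = -a" using b0 t_def by simp
      have "(2*t*a + t^2*b) * (b+1)^2 = 2*a*(t*(b+1))*(b+1) + (t*(b+1))^2*b"
        by (simp add: algebra_simps power2_eq_square)
      also have "\<dots> = -(a^2)*(b+2)" unfolding ts by (simp add: algebra_simps power2_eq_square)
      finally have e: "(2*t*a + t^2*b) * (b+1)^2 = -(a^2)*(b+2)" .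
      have "-(a^2)*(b+2) < 0" using \<open>a \<noteq> 0\<close> b0 by (simp add: mult_pos_pos)
      then show ?thesis using e b0 by (smt (verit) zero_le_power2 mult_nonneg_nonneg)
    qed
    ultimately show False by simp
  qed
  then show ?thesis by (simp add: a_def w_def)
qed

lemma eig_bdd:
  fixes M :: "real^'r^'r"
  shows "bdd_below (eigvals M)"
proof -
  obtain K where K: "\<And>x. norm (M *v x) \<le> K * norm x"
    using onorm_le_matrix_component_sum
    by (metis matrix_vector_mul_bounded_linear onorm)
  show ?thesis unfolding bdd_below_def eigvals_def
  proof (intro exI[of _ "-K"] ballI)
    fix e assume "e \<in> {e. \<exists>v. v \<noteq> 0 \<and> M *v v = e *\<^sub>R v}"
    then obtain v where v: "v \<noteq> 0" "M *v v = e *\<^sub>R v" by auto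
    have "\<bar>e\<bar> * norm v \<le> K * norm v" using K[of v] v by simp
    then have "\<bar>e\<bar> \<le> K" using v by simp
    then show "-K \<le> e" by simp
  qed
qed

lemma qform_lower:
  fixes M :: "real^'r^'r"
  assumes sym: "transpose M = M" and lm: "lam_min M \<ge> c"
  shows "qform M v \<ge> c * (norm v)^2"
proof -
  define Sph :: "(real^'r) set" where "Sph = {v. norm v = 1}"
  have "Sph = sphere 0 1" by (auto simp: Sph_def)
  then have cS: "compact Sph" by simp
  obtain i :: 'r where True by auto
  have "axis i 1 \<in> Sph" by (simp add: Sph_def norm_axis_1)
  then have neS: "Sph \<noteq> {}" by blast
  have cm: "continuous_on Sph (\<lambda>v. M *v v)"
    by (rule linear_continuous_on) (rule matrix_vector_mul_bounded_linear)
  have cont: "continuous_on Sph (qform M)" unfolding qform_def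
    by (rule continuous_on_inner[OF continuous_on_id cm])
  obtain v0 where v0: "v0 \<in> Sph" and mn: "\<And>v. v \<in> Sph \<Longrightarrow> qform M v0 \<le> qform M v"
    using continuous_attains_inf[OF cS neS cont] by blast
  define m where "m = qform M v0"
  have lowm: "qform M v \<ge> m * (norm v)^2" for v
  proof (cases "v = 0")
    case True then show ?thesis by (simp add: qform_def)
  next
    case False
    define u where "u = (1 / norm v) *\<^sub>R v"
    have "u \<in> Sph" using False by (simp add: Sph_def u_def)
    then have "m \<le> qform M u" using mn m_def by simp
    also have "qform M u = qform M v / (norm v)^2"
      using False by (simp add: u_def qform_scale power_divide)
    finally show ?thesis using False by (simp add: field_simps)
  qed
  define J where "J = M - m *\<^sub>R mat 1"
  have Jv: "J *v v = M *v v - m *\<^sub>R v" for v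
    by (simp only: J_def matrix_vector_mult_diff_rdistrib scaleR_matrix_vector_assoc[symmetric] matrix_vector_mul_lid)
  have qJ: "qform J v = qform M v - m * (norm v)^2" for v
    by (simp add: qform_def Jv inner_diff_right power2_norm_eq_inner)
  have symJ: "transpose J = J" using sym
    by (simp add: J_def transpose_def vec_eq_iff mat_def)
  have "J *v v0 = 0"
    by (rule psd_kernel[OF symJ]) (use qJ lowm m_def v0 Sph_def in auto)
  then have "M *v v0 = m *\<^sub>R v0" by (simp add: Jv)
  moreover have "v0 \<noteq> 0" using v0 by (auto simp: Sph_def)
  ultimately have "m \<in> eigvals M" unfolding eigvals_def by auto
  then have "lam_min M \<le> m" unfolding lam_min_def using eig_bdd by (rule cInf_lower)
  then have "c \<le> m" using lm by simp
  then show ?thesis using order.trans[OF mult_right_mono[OF \<open>c \<le> m\<close> zero_le_power2] lowm] by simp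
qed

definition pr_lt :: "'w measure \<Rightarrow> real \<Rightarrow> (nat \<Rightarrow> 'w set) \<Rightarrow> bool" where
  "pr_lt M d P \<longleftrightarrow> eventually (\<lambda>T. \<exists>F\<in>sets M. measure M F < d \<and> P T \<inter> space M \<subseteq> F) sequentially"

definition small :: "'w measure \<Rightarrow> (nat \<Rightarrow> 'w set) \<Rightarrow> bool" where
  "small M P \<longleftrightarrow> (\<forall>d>0. pr_lt M d P)"

lemma pr_lt_mono:
  assumes "pr_lt M d Q" "eventually (\<lambda>T. \<forall>\<omega>\<in>space M. \<omega> \<in> P T \<longrightarrow> \<omega> \<in> Q T) sequentially" "d \<le> d'"
  shows "pr_lt M d' P"
proof -
  have "eventually (\<lambda>T. (\<forall>\<omega>\<in>space M. \<omega> \<in> P T \<longrightarrow> \<omega> \<in> Q T) \<and>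
      (\<exists>F\<in>sets M. measure M F < d \<and> Q T \<inter> space M \<subseteq> F)) sequentially"
    using assms(2) assms(1)[unfolded pr_lt_def] by (rule eventually_conj)
  then show ?thesis unfolding pr_lt_def
  proof (rule eventually_mono)
    fix T assume h: "(\<forall>\<omega>\<in>space M. \<omega> \<in> P T \<longrightarrow> \<omega> \<in> Q T) \<and>
      (\<exists>F\<in>sets M. measure M F < d \<and> Q T \<inter> space M \<subseteq> F)"
    then obtain F where F: "F \<in> sets M" "measure M F < d" "Q T \<inter> space M \<subseteq> F" by blast
    have "P T \<inter> space M \<subseteq> F" using h F(3) by blast
    then show "\<exists>F\<in>sets M. measure M F < d' \<and> P T \<inter> space M \<subseteq> F"
      using F assms(3) by (intro bexI[of _ F]) auto
  qed
qed

lemma pr_lt_union: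
  assumes "pr_lt M d1 P" "pr_lt M d2 Q"
  shows "pr_lt M (d1 + d2) (\<lambda>T. P T \<union> Q T)"
proof -
  have "eventually (\<lambda>T. (\<exists>F\<in>sets M. measure M F < d1 \<and> P T \<inter> space M \<subseteq> F) \<and>
      (\<exists>F\<in>sets M. measure M F < d2 \<and> Q T \<inter> space M \<subseteq> F)) sequentially"
    using assms unfolding pr_lt_def by (rule eventually_conj)
  then show ?thesis unfolding pr_lt_def
  proof (rule eventually_mono)
    fix T assume "(\<exists>F\<in>sets M. measure M F < d1 \<and> P T \<inter> space M \<subseteq> F) \<and>
      (\<exists>F\<in>sets M. measure M F < d2 \<and> Q T \<inter> space M \<subseteq> F)"
    then obtain F1 F2 where F: "F1 \<in> sets M" "measure M F1 < d1" "P T \<inter> space M \<subseteq> F1"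
       "F2 \<in> sets M" "measure M F2 < d2" "Q T \<inter> space M \<subseteq> F2" by blast
    have "measure M (F1 \<union> F2) \<le> measure M F1 + measure M F2"
      using F by (intro measure_Un_le) auto
    then show "\<exists>F\<in>sets M. measure M F < d1 + d2 \<and> (P T \<union> Q T) \<inter> space M \<subseteq> F"
      using F by (intro bexI[of _ "F1 \<union> F2"]) auto
  qed
qed

lemma small_union:
  assumes "small M P" "small M Q"
  shows "small M (\<lambda>T. P T \<union> Q T)"
  unfolding small_def
proof (intro allI impI)
  fix d :: real assume "d > 0"
  then have "pr_lt M (d/2 + d/2) (\<lambda>T. P T \<union> Q T)"
    using assms by (intro pr_lt_union) (auto simp: small_def)
  then show "pr_lt M d (\<lambda>T. P T \<union> Q T)" by simp
qed

lemma small_mono: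
  assumes "small M Q" "eventually (\<lambda>T. \<forall>\<omega>\<in>space M. \<omega> \<in> P T \<longrightarrow> \<omega> \<in> Q T) sequentially"
  shows "small M P"
  using assms pr_lt_mono unfolding small_def by blast

lemma vanish_small: "vanish_p M E \<longleftrightarrow> (\<forall>e>0. small M (\<lambda>T. E T e))"
  unfolding vanish_p_def small_def pr_lt_def by blast

lemma op_unif_small: "op_unif M A X \<longleftrightarrow> (\<forall>e>0. small M (\<lambda>T. {\<omega>. \<exists>a\<in>A. \<bar>X T a \<omega>\<bar> > e}))"
  unfolding op_unif_def vanish_small by simp

lemma diag:
  assumes sm: "\<forall>e>0. small M (\<lambda>T. E T e)"
  shows "\<exists>\<gamma>. (\<forall>T. \<gamma> T > (0::real)) \<and> \<gamma> \<longlonglongrightarrow> 0 \<and> small M (\<lambda>T. E T (\<gamma> T))"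
proof -
  define Q where "Q k T \<longleftrightarrow> (\<exists>F\<in>sets M. measure M F < 1 / (real k + 1) \<and> E T (1 / (real k + 1)) \<inter> space M \<subseteq> F)" for k T
  have "\<forall>k. \<exists>N. \<forall>T\<ge>N. Q k T"
  proof
    fix k
    have "pr_lt M (1 / (real k + 1)) (\<lambda>T. E T (1 / (real k + 1)))"
      using sm unfolding small_def by simp
    then show "\<exists>N. \<forall>T\<ge>N. Q k T" unfolding pr_lt_def Q_def eventually_sequentially .
  qed
  then obtain N where N: "\<And>k T. T \<ge> N k \<Longrightarrow> Q k T" by metis
  define ST where "ST T = {k. k \<le> T \<and> (\<forall>j\<le>k. N j \<le> T)}" for T
  define K where "K T = (if ST T = {} then 0 else Max (ST T))" for T
  define \<gamma> where "\<gamma> T = 1 / (real (K T) + 1)" for T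
  have finST: "finite (ST T)" for T unfolding ST_def by auto
  have Kin: "ST T \<noteq> {} \<Longrightarrow> K T \<in> ST T" for T
    using finST by (simp add: K_def)
  have Kge: "eventually (\<lambda>T. K T \<ge> m \<and> ST T \<noteq> {}) sequentially" for m
  proof -
    define T0 where "T0 = max m (Max (N ` {..m}))"
    show ?thesis unfolding eventually_sequentially
    proof (intro exI[of _ T0] allI impI)
      fix T assume T: "T \<ge> T0"
      have "m \<in> ST T" unfolding ST_def
      proof (intro CollectI conjI allI impI)
        show "m \<le> T" using T by (simp add: T0_def)
        fix j assume "j \<le> m"
        then show "N j \<le> T" using T by (simp add: T0_def)
      qed
      then have "ST T \<noteq> {}" by auto
      moreover have "m \<le> K T" using \<open>m \<in> ST T\<close> finST[of T] \<open>ST T \<noteq> {}\<close> by (simp add: K_def)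
      ultimately show "m \<le> K T \<and> ST T \<noteq> {}" by simp
    qed
  qed
  have pos: "\<forall>T. \<gamma> T > 0" by (simp add: \<gamma>_def)
  have small_g: "\<gamma> T \<le> 1 / (real m + 1)" if "m \<le> K T" for T m
    unfolding \<gamma>_def using that by (simp add: frac_le)
  have lim: "\<gamma> \<longlonglongrightarrow> 0"
  proof (rule order_tendstoI)
    fix e :: real assume "e < 0"
    then show "eventually (\<lambda>T. e < \<gamma> T) sequentially" using pos
      by (intro always_eventually allI) (meson order.strict_trans)
  next
    fix e :: real assume "0 < e"
    then obtain m :: nat where m: "1 / (real m + 1) < e"
      by (metis nat_approx_posE of_nat_Suc add.commute)
    show "eventually (\<lambda>T. \<gamma> T < e) sequentially"
      using Kge[of m] by (rule eventually_mono) (use small_g m in fastforce)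
  qed
  have "small M (\<lambda>T. E T (\<gamma> T))" unfolding small_def pr_lt_def
  proof (intro allI impI)
    fix d :: real assume "0 < d"
    then obtain m :: nat where m: "1 / (real m + 1) < d"
      by (metis nat_approx_posE of_nat_Suc add.commute)
    show "eventually (\<lambda>T. \<exists>F\<in>sets M. measure M F < d \<and> E T (\<gamma> T) \<inter> space M \<subseteq> F) sequentially"
      using Kge[of m]
    proof (rule eventually_mono)
      fix T assume a: "m \<le> K T \<and> ST T \<noteq> {}"
      then have "K T \<in> ST T" using Kin by simp
      then have "N (K T) \<le> T" by (simp add: ST_def)
      then have "Q (K T) T" by (rule N)
      then obtain F where F: "F \<in> sets M" "measure M F < \<gamma> T" "E T (\<gamma> T) \<inter> space M \<subseteq> F"
        unfolding Q_def \<gamma>_def by blast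
      have "\<gamma> T < d" using small_g[of m T] a m by simp
      then show "\<exists>F\<in>sets M. measure M F < d \<and> E T (\<gamma> T) \<inter> space M \<subseteq> F"
        using F by (intro bexI[of _ F]) auto
    qed
  qed
  then show ?thesis using pos lim by blast
qed

lemma sup_dense:
  fixes g :: "'a::metric_space \<Rightarrow> real"
  assumes D: "D \<subseteq> A" "A \<subseteq> closure D" and cA: "closed A" and ne: "A \<noteq> {}"
    and cg: "continuous_on A g" and bd: "\<And>a. a \<in> A \<Longrightarrow> g a \<le> B"
  shows "Sup (g ` A) = Sup (g ` D)"
proof -
  have cD: "closure D = A" using D cA by (metis closure_minimal subset_antisym)
  have neD: "D \<noteq> {}" using cD ne by auto
  have bA: "bdd_above (g ` A)" using bd by (rule bdd_aboveI2)
  have bD: "bdd_above (g ` D)" using bd D by (intro bdd_aboveI2) auto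
  have "g ` D \<subseteq> {..Sup (g ` D)}" using bD by (auto intro: cSUP_upper)
  then have "g ` closure D \<subseteq> {..Sup (g ` D)}"
    by (intro image_closure_subset) (use cg cD in auto)
  then have le: "Sup (g ` A) \<le> Sup (g ` D)" using cD ne by (auto intro!: cSUP_least)
  have "Sup (g ` D) \<le> Sup (g ` A)" using D neD bA by (intro cSUP_subset_mono) auto
  then show ?thesis using le by simp
qed

definition trn :: "real \<Rightarrow> ('a \<Rightarrow> real^'r) \<Rightarrow> 'a \<Rightarrow> real" where
  "trn K f a = min (K + 1) (norm (f a))"

definition hK :: "'a set \<Rightarrow> real \<Rightarrow> ('a \<Rightarrow> real^'r) \<Rightarrow> real" where
  "hK A K f = min 1 (max 0 (Sup (trn K f ` A) - K))"

lemma trn_le: "trn K f a \<le> K + 1" by (simp add: trn_def)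

lemma hK_cont:
  assumes ne: "A \<noteq> {}" and e: "e > 0" and g: "\<forall>a\<in>A. norm (f a - g a) < e/2"
  shows "\<bar>hK A K f - hK A K g\<bar> < e"
proof -
  have pt: "trn K f a \<le> trn K g a + e/2" "trn K g a \<le> trn K f a + e/2" if "a \<in> A" for a
  proof -
    have "\<bar>norm (f a) - norm (g a)\<bar> \<le> norm (f a - g a)" by (rule norm_triangle_ineq3)
    then have "\<bar>norm (f a) - norm (g a)\<bar> < e/2" using g that by auto
    then show "trn K f a \<le> trn K g a + e/2" "trn K g a \<le> trn K f a + e/2"
      unfolding trn_def by linarith+
  qed
  have bf: "bdd_above (trn K f ` A)" and bg: "bdd_above (trn K g ` A)"
    by (rule bdd_aboveI2, rule trn_le)+
  have "Sup (trn K f ` A) \<le> Sup (trn K g ` A) + e/2"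
  proof (rule cSUP_least[OF ne])
    fix x assume x: "x \<in> A"
    then have "trn K g x \<le> Sup (trn K g ` A)" using bg by (rule cSUP_upper)
    then show "trn K f x \<le> Sup (trn K g ` A) + e/2" using pt(1)[OF x] by linarith
  qed
  moreover have "Sup (trn K g ` A) \<le> Sup (trn K f ` A) + e/2"
  proof (rule cSUP_least[OF ne])
    fix x assume x: "x \<in> A"
    then have "trn K f x \<le> Sup (trn K f ` A)" using bf by (rule cSUP_upper)
    then show "trn K g x \<le> Sup (trn K f ` A) + e/2" using pt(2)[OF x] by linarith
  qed
  ultimately show ?thesis unfolding hK_def using e by linarith
qed

lemma hK_big:
  assumes "a \<in> A" "norm (f a) > K + 1"
  shows "hK A K f = 1"
proof -
  have "trn K f a = K + 1" using assms by (simp add: trn_def)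
  moreover have "bdd_above (trn K f ` A)" by (rule bdd_aboveI2, rule trn_le)
  then have "trn K f a \<le> Sup (trn K f ` A)"
    using assms(1) by (intro cSUP_upper)
  ultimately show ?thesis unfolding hK_def by simp
qed

lemma tight:
  fixes X :: "nat \<Rightarrow> 'a::euclidean_space \<Rightarrow> 'w \<Rightarrow> real^'r" and S :: "'a \<Rightarrow> 'v \<Rightarrow> real^'r"
  assumes PM: "prob_space M" and PN: "prob_space N" and cA: "compact A"
   and Xm: "\<And>T a. a \<in> A \<Longrightarrow> (\<lambda>\<omega>. norm (X T a \<omega>)) \<in> borel_measurable M"
   and Xc: "\<And>T \<omega>. \<omega> \<in> space M \<Longrightarrow> continuous_on A (\<lambda>a. X T a \<omega>)"
   and wc: "weak_conv_unif A M X N S"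
   and Sm: "\<And>a. a \<in> A \<Longrightarrow> (\<lambda>\<omega>. norm (S a \<omega>)) \<in> borel_measurable N"
   and Sc: "AE \<omega> in N. continuous_on A (\<lambda>a. S a \<omega>)"
  shows "\<forall>d>0. \<exists>K. pr_lt M d (\<lambda>T. {\<omega>. \<exists>a\<in>A. norm (X T a \<omega>) > K})"
proof (cases "A = {}")
  case True
  then show ?thesis unfolding pr_lt_def
    by (auto intro!: exI[of _ 0] bexI[of _ "{}"])
next
  case ne: False
  interpret M: prob_space M by (rule PM)
  interpret N: prob_space N by (rule PN)
  have clA: "closed A" using cA by (rule compact_imp_closed)
  obtain D where D: "countable D" "D \<subseteq> A" "A \<subseteq> closure D" using separable by blast
  have neD: "D \<noteq> {}" using D ne by auto
  have trc: "continuous_on A (trn K f)" if "continuous_on A f" for K and f :: "'a \<Rightarrow> real^'r"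
    unfolding trn_def by (intro continuous_intros that)
  have hD: "hK A K f = min 1 (max 0 (Sup (trn K f ` D) - K))" if "continuous_on A f" for K and f :: "'a \<Rightarrow> real^'r"
    unfolding hK_def using sup_dense[OF D(2,3) clA ne trc[OF that] trn_le] by simp
  define psi where "psi K \<omega> = min 1 (max 0 (Sup (trn K (\<lambda>a. S a \<omega>) ` D) - K))" for K \<omega>
  have psim: "psi K \<in> borel_measurable N" for K
  proof -
    have "(\<lambda>\<omega>. Sup ((\<lambda>a. min (K + 1) (norm (S a \<omega>))) ` D)) \<in> borel_measurable N"
    proof (rule borel_measurable_cSUP)
      show "countable D" by (rule D(1))
      show "(\<lambda>\<omega>. min (K + 1) (norm (S i \<omega>))) \<in> borel_measurable N" if "i \<in> D" for i
        using that D(2) by (intro borel_measurable_min borel_measurable_const Sm) auto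
      show "bdd_above ((\<lambda>i. min (K + 1) (norm (S i \<omega>))) ` D)" for \<omega>
        by (rule bdd_aboveI2[where M="K+1"]) simp
    qed
    then show ?thesis unfolding psi_def trn_def by measurable
  qed
  have psi01: "0 \<le> psi K \<omega>" "psi K \<omega> \<le> 1" for K \<omega> by (auto simp: psi_def)
  have hS_le: "(\<integral>\<omega>. hK A K (\<lambda>a. S a \<omega>) \<partial>N) \<le> (\<integral>\<omega>. psi K \<omega> \<partial>N)" for K
  proof (cases "integrable N (\<lambda>\<omega>. hK A K (\<lambda>a. S a \<omega>))")
    case True
    have "AE \<omega> in N. hK A K (\<lambda>a. S a \<omega>) = psi K \<omega>"
      using Sc by eventually_elim (simp add: hD psi_def)
    then have "(\<integral>\<omega>. hK A K (\<lambda>a. S a \<omega>) \<partial>N) = (\<integral>\<omega>. psi K \<omega> \<partial>N)"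
      using True psim by (intro integral_cong_AE) auto
    then show ?thesis by simp
  next
    case False
    then show ?thesis using psi01 by (simp add: not_integrable_integral_eq)
  qed
  have psi_lim: "(\<lambda>K::nat. \<integral>\<omega>. psi (real K) \<omega> \<partial>N) \<longlonglongrightarrow> (\<integral>\<omega>. 0 \<partial>N)"
  proof (rule integral_dominated_convergence[where w="\<lambda>_. 1"])
    show "(\<lambda>\<omega>. 0::real) \<in> borel_measurable N" by simp
    show "\<And>i. psi (real i) \<in> borel_measurable N" by (rule psim)
    show "integrable N (\<lambda>_. 1::real)" by simp
    show "\<And>i. AE \<omega> in N. norm (psi (real i) \<omega>) \<le> 1" using psi01 by simp
    show "AE \<omega> in N. (\<lambda>i. psi (real i) \<omega>) \<longlonglongrightarrow> 0"
      using Sc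
    proof eventually_elim
      fix \<omega> assume c: "continuous_on A (\<lambda>a. S a \<omega>)"
      have "compact ((\<lambda>a. S a \<omega>) ` A)" using c cA by (rule compact_continuous_image)
      then have "bounded ((\<lambda>a. S a \<omega>) ` A)" by (rule compact_imp_bounded)
      then obtain B0 where B0': "\<forall>x\<in>(\<lambda>a. S a \<omega>) ` A. norm x \<le> B0"
        unfolding bounded_iff by blast
      have B0: "\<And>a. a \<in> A \<Longrightarrow> norm (S a \<omega>) \<le> B0" using B0' by blast
      obtain K0 :: nat where K0: "B0 \<le> real K0" using real_arch_simple by blast
      have "eventually (\<lambda>i. psi (real i) \<omega> = 0) sequentially"
        unfolding eventually_sequentially
      proof (intro exI[of _ K0] allI impI)
        fix i assume "K0 \<le> i"
        then have Bi: "B0 \<le> real i" using K0 by linarith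
        have "Sup (trn (real i) (\<lambda>a. S a \<omega>) ` D) \<le> real i"
        proof (rule cSUP_least[OF neD])
          fix x assume "x \<in> D"
          then have "norm (S x \<omega>) \<le> B0" using B0 D(2) by blast
          then show "trn (real i) (\<lambda>a. S a \<omega>) x \<le> real i" using Bi by (simp add: trn_def)
        qed
        then show "psi (real i) \<omega> = 0" by (simp add: psi_def)
      qed
      then show "(\<lambda>i. psi (real i) \<omega>) \<longlonglongrightarrow> 0" by (rule tendsto_eventually)
    qed
  qed
  show ?thesis
  proof (intro allI impI)
    fix d :: real assume d: "d > 0"
    have "eventually (\<lambda>K. (\<integral>\<omega>. psi (real K) \<omega> \<partial>N) < d/2) sequentially"
      using psi_lim d by (intro order_tendstoD(2)) auto
    then obtain K :: nat where K: "(\<integral>\<omega>. psi (real K) \<omega> \<partial>N) < d/2"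
      by (meson eventually_sequentially order_refl)
    define h :: "('a \<Rightarrow> real^'r) \<Rightarrow> real" where "h = hK A (real K)"
    have hlim: "(\<lambda>T. \<integral>\<omega>. h (\<lambda>a. X T a \<omega>) \<partial>M) \<longlonglongrightarrow> (\<integral>\<omega>. h (\<lambda>a. S a \<omega>) \<partial>N)"
    proof -
      have "(\<exists>B. \<forall>f. \<bar>h f\<bar> \<le> B)" by (auto simp: h_def hK_def intro!: exI[of _ 1])
      moreover have "\<forall>f g. (\<forall>a\<in>A. f a = g a) \<longrightarrow> h f = h g"
        by (auto simp: h_def hK_def trn_def intro!: arg_cong[where f=Sup] image_cong)
      moreover have "\<forall>f. (\<exists>B. \<forall>a\<in>A. norm (f a) \<le> B) \<longrightarrow>
          (\<forall>e>0. \<exists>d>0. \<forall>g. (\<exists>B. \<forall>a\<in>A. norm (g a) \<le> B) \<longrightarrow>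
              (\<forall>a\<in>A. norm (f a - g a) < d) \<longrightarrow> \<bar>h f - h g\<bar> < e)"
      proof (intro allI impI)
        fix f :: "'a \<Rightarrow> real^'r" and e :: real assume "e > 0"
        then show "\<exists>d>0. \<forall>g. (\<exists>B. \<forall>a\<in>A. norm (g a) \<le> B) \<longrightarrow>
              (\<forall>a\<in>A. norm (f a - g a) < d) \<longrightarrow> \<bar>h f - h g\<bar> < e"
          unfolding h_def using hK_cont[OF ne] by (intro exI[of _ "e/2"]) auto
      qed
      ultimately show ?thesis using wc unfolding weak_conv_unif_def by blast
    qed
    have "(\<integral>\<omega>. h (\<lambda>a. S a \<omega>) \<partial>N) < d/2" using hS_le[of "real K"] K by (simp add: h_def)
    then have ev: "eventually (\<lambda>T. (\<integral>\<omega>. h (\<lambda>a. X T a \<omega>) \<partial>M) < d/2) sequentially"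
      using hlim by (intro order_tendstoD(2)) auto
    show "\<exists>K. pr_lt M d (\<lambda>T. {\<omega>. \<exists>a\<in>A. norm (X T a \<omega>) > K})"
      unfolding pr_lt_def
    proof (intro exI[of _ "real K + 1"], rule eventually_mono[OF ev])
      fix T assume lt: "(\<integral>\<omega>. h (\<lambda>a. X T a \<omega>) \<partial>M) < d/2"
      define phi where "phi \<omega> = h (\<lambda>a. X T a \<omega>)" for \<omega>
      define phiD where "phiD \<omega> = min 1 (max 0 (Sup (trn (real K) (\<lambda>a. X T a \<omega>) ` D) - real K))" for \<omega>
      have "phiD \<in> borel_measurable M"
      proof -
        have "(\<lambda>\<omega>. Sup ((\<lambda>a. min (real K + 1) (norm (X T a \<omega>))) ` D)) \<in> borel_measurable M"
        proof (rule borel_measurable_cSUP)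
          show "countable D" by (rule D(1))
          show "(\<lambda>\<omega>. min (real K + 1) (norm (X T i \<omega>))) \<in> borel_measurable M" if "i \<in> D" for i
            using that D(2) by (intro borel_measurable_min borel_measurable_const Xm) auto
          show "bdd_above ((\<lambda>i. min (real K + 1) (norm (X T i \<omega>))) ` D)" for \<omega>
            by (rule bdd_aboveI2[where M="real K+1"]) simp
        qed
        then show ?thesis unfolding phiD_def trn_def by measurable
      qed
      moreover have "\<And>\<omega>. \<omega> \<in> space M \<Longrightarrow> phi \<omega> = phiD \<omega>"
        unfolding phi_def phiD_def h_def using hD[OF Xc] by simp
      ultimately have phim: "phi \<in> borel_measurable M"
        using measurable_cong by metis
      have phi01: "0 \<le> phi \<omega>" "phi \<omega> \<le> 1" for \<omega> by (auto simp: phi_def h_def hK_def)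
      have intphi: "integrable M phi"
        using phim phi01 by (intro M.integrable_const_bound[where B=1]) auto
      define F where "F = {\<omega> \<in> space M. phi \<omega> \<ge> 1}"
      have Fs: "F \<in> sets M" unfolding F_def using phim by measurable
      have intF: "integrable M (\<lambda>\<omega>. indicator F \<omega> :: real)"
        using Fs by (intro M.integrable_const_bound[where B=1]) (auto simp: indicator_def)
      have "measure M F = (\<integral>\<omega>. indicator F \<omega> \<partial>M)" using Fs by simp
      also have "\<dots> \<le> (\<integral>\<omega>. phi \<omega> \<partial>M)"
        using Fs intphi phi01 intF by (intro integral_mono) (auto simp: F_def indicator_def)
      also have "\<dots> < d" using lt d by (simp add: phi_def)
      finally have mF: "measure M F < d" .
      have "{\<omega>. \<exists>a\<in>A. norm (X T a \<omega>) > real K + 1} \<inter> space M \<subseteq> F"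
        unfolding F_def phi_def h_def using hK_big by fastforce
      then show "\<exists>F\<in>sets M. measure M F < d \<and> {\<omega>. \<exists>a\<in>A. norm (X T a \<omega>) > real K + 1} \<inter> space M \<subseteq> F"
        using Fs mF by blast
    qed
  qed
qed

lemma snd_le1: "std_normal_density x \<le> 1"
proof -
  have "exp (- x\<^sup>2 / 2) \<le> 1" by simp
  moreover have "1 / sqrt (2 * pi) \<le> 1" using pi_gt3 by (simp add: divide_le_eq)
  ultimately show ?thesis unfolding std_normal_density_def
    by (metis mult_le_one exp_ge_zero zero_le_divide_1_iff real_sqrt_ge_zero pi_ge_zero mult_nonneg_nonneg zero_le_numeral)
qed

lemma ftd_bounds:
  assumes "ph (Suc p) \<ge> m" "m > 0"
  shows "0 < ftd p yy t ph" "ftd p yy t ph \<le> 1 / sqrt m"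
proof -
  have s: "sqrt (ph (Suc p)) \<ge> sqrt m" "sqrt m > 0" using assms by auto
  have pos: "std_normal_density z > 0" for z by (simp add: normal_density_pos)
  show "0 < ftd p yy t ph" unfolding ftd_def Let_def using s pos by simp
  have "std_normal_density z / sqrt (ph (Suc p)) \<le> 1 / sqrt m" for z
    using s snd_le1[of z] pos[of z] by (intro frac_le) auto
  then show "ftd p yy t ph \<le> 1 / sqrt m" unfolding ftd_def Let_def by simp
qed

lemma LT_bdd:
  assumes A1: "Assumption1 M p q1 q2 sg y eps phs PhiT A B Phi mw"
    and a: "a \<in> A" and w: "\<omega> \<in> space M"
  shows "bdd_above ((\<lambda>x. LT p sg q1 y mw T a (fst x) (fst (snd x)) (snd (snd x)) \<omega>) ` (B \<times> Phi \<times> Phi))"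
proof -
  have cP: "compact PhiT" and sub: "PhiT \<subseteq> vec (p+2)"
    and pos: "\<forall>ph\<in>PhiT. ar_root_cond p ph \<and> ph (Suc p) > 0"
    and phs: "phs \<in> vinterior (p + 2) PhiT"
    and Bv: "B \<subseteq> vec q1" and Pv: "Phi \<subseteq> vec q2"
    and iff: "\<forall>b\<in>vec q1. \<forall>ph\<in>vec q2. (b \<in> B \<and> ph \<in> Phi) \<longleftrightarrow> Pinv sg (vcat q1 b ph) \<in> PhiT"
    and mwb: "\<forall>t. \<forall>a\<in>A. \<forall>b\<in>B. \<forall>ph\<in>Phi. \<forall>vp\<in>Phi.
        (\<forall>\<omega>\<in>space M. 0 < mw t a b ph vp \<omega> \<and> mw t a b ph vp \<omega> < 1)"
    using A1 unfolding Assumption1_def by auto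
  have neP: "PhiT \<noteq> {}" using phs by (auto simp: vinterior_def)
  have "continuous_on PhiT (\<lambda>ph. ph (Suc p))"
    by (rule continuous_on_subset[OF continuous_on_product_coordinates]) simp
  then obtain ph0 where ph0: "ph0 \<in> PhiT" "\<And>ph. ph \<in> PhiT \<Longrightarrow> ph0 (Suc p) \<le> ph (Suc p)"
    using continuous_attains_inf[OF cP neP] by blast
  define m where "m = ph0 (Suc p)"
  have m0: "m > 0" using pos ph0 by (simp add: m_def)
  define C where "C = \<bar>ln (1 / sqrt m)\<bar>"
  have trm: "ln (w * ftd p yy t (Pinv sg (vcat q1 b ph)) + (1 - w) * ftd p yy t (Pinv sg (vcat q1 b vp))) \<le> C"
    if "b \<in> B" "ph \<in> Phi" "vp \<in> Phi" "0 < w" "w < 1" for yy t b ph vp w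
  proof -
    have "Pinv sg (vcat q1 b ph) \<in> PhiT" "Pinv sg (vcat q1 b vp) \<in> PhiT"
      using iff that Bv Pv by blast+
    then have m1: "Pinv sg (vcat q1 b ph) (Suc p) \<ge> m" "Pinv sg (vcat q1 b vp) (Suc p) \<ge> m"
      using ph0 by (auto simp: m_def)
    note f1 = ftd_bounds[where ph="Pinv sg (vcat q1 b ph)" and p=p and yy=yy and t=t, OF m1(1) m0]
      and f2 = ftd_bounds[where ph="Pinv sg (vcat q1 b vp)" and p=p and yy=yy and t=t, OF m1(2) m0]
    define X where "X = w * ftd p yy t (Pinv sg (vcat q1 b ph)) + (1 - w) * ftd p yy t (Pinv sg (vcat q1 b vp))"
    have X0: "X > 0" unfolding X_def using f1 f2 that by (intro add_pos_pos mult_pos_pos) auto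
    have "X \<le> w * (1 / sqrt m) + (1 - w) * (1 / sqrt m)" unfolding X_def
      using f1 f2 that by (intro add_mono mult_left_mono) auto
    also have "w * (1 / sqrt m) + (1 - w) * (1 / sqrt m) = 1 / sqrt m" by (simp add: add_divide_distrib[symmetric])
    finally have "X \<le> 1 / sqrt m" .
    then have "ln X \<le> ln (1 / sqrt m)" using X0 m0 by (subst ln_le_cancel_iff) auto
    then show ?thesis unfolding X_def C_def by simp
  qed
  show ?thesis
  proof (rule bdd_aboveI2)
    fix x assume x: "x \<in> B \<times> Phi \<times> Phi"
    have "LT p sg q1 y mw T a (fst x) (fst (snd x)) (snd (snd x)) \<omega> \<le> (\<Sum>t\<in>{1..int T}. C)"
      unfolding LT_def
    proof (rule sum_mono)
      fix t assume "t \<in> {1..int T}"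
      show "ln (mw t a (fst x) (fst (snd x)) (snd (snd x)) \<omega> * ftd p (\<lambda>s. y s \<omega>) t (Pinv sg (vcat q1 (fst x) (fst (snd x))))
          + (1 - mw t a (fst x) (fst (snd x)) (snd (snd x)) \<omega>) * ftd p (\<lambda>s. y s \<omega>) t (Pinv sg (vcat q1 (fst x) (snd (snd x))))) \<le> C"
        using x mwb a w by (intro trm) auto
    qed
    then show "LT p sg q1 y mw T a (fst x) (fst (snd x)) (snd (snd x)) \<omega> \<le> real T * C" by simp
  qed
qed

lemma R_raw:
  fixes R :: "nat \<Rightarrow> 'a \<Rightarrow> 'b \<Rightarrow> 'c \<Rightarrow> 'w \<Rightarrow> real" and lam :: "nat \<Rightarrow> 'a \<Rightarrow> 'b \<Rightarrow> 'c \<Rightarrow> real^'r"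
  assumes A5iv: "\<forall>\<gamma> :: nat \<Rightarrow> real. (\<forall>T. \<gamma> T > 0) \<and> \<gamma> \<longlonglongrightarrow> 0 \<longrightarrow>
        vanish_p M (\<lambda>T e. {\<omega>. \<exists>a\<in>A. \<exists>b\<in>B. \<exists>x\<in>P a. dst b x \<le> \<gamma> T \<and>
            \<bar>R T a b x \<omega>\<bar> / (1 + norm (lam T a b x))\<^sup>2 > e})"
    and pt: "\<And>T a \<omega>. a \<in> A \<Longrightarrow> \<omega> \<in> space M \<Longrightarrow> pb T a \<omega> \<in> B \<and> px T a \<omega> \<in> P a"
    and dd: "op_unif M A (\<lambda>T a \<omega>. dst (pb T a \<omega>) (px T a \<omega>))"
  shows "\<forall>e>0. small M (\<lambda>T. {\<omega>. \<exists>a\<in>A. \<bar>R T a (pb T a \<omega>) (px T a \<omega>) \<omega>\<bar>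
              > e * (1 + norm (lam T a (pb T a \<omega>) (px T a \<omega>)))\<^sup>2})"
proof (intro allI impI)
  fix e :: real assume e: "e > 0"
  obtain \<gamma> where g: "\<forall>T. \<gamma> T > (0::real)" "\<gamma> \<longlonglongrightarrow> 0"
    and sg: "small M (\<lambda>T. {\<omega>. \<exists>a\<in>A. \<bar>dst (pb T a \<omega>) (px T a \<omega>)\<bar> > \<gamma> T})"
    using diag[of M "\<lambda>T e. {\<omega>. \<exists>a\<in>A. \<bar>dst (pb T a \<omega>) (px T a \<omega>)\<bar> > e}"] dd
    unfolding op_unif_small by blast
  have "vanish_p M (\<lambda>T e. {\<omega>. \<exists>a\<in>A. \<exists>b\<in>B. \<exists>x\<in>P a. dst b x \<le> \<gamma> T \<and>
            \<bar>R T a b x \<omega>\<bar> / (1 + norm (lam T a b x))\<^sup>2 > e})"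
    using A5iv g by blast
  then have s2: "small M (\<lambda>T. {\<omega>. \<exists>a\<in>A. \<exists>b\<in>B. \<exists>x\<in>P a. dst b x \<le> \<gamma> T \<and>
            \<bar>R T a b x \<omega>\<bar> / (1 + norm (lam T a b x))\<^sup>2 > e})"
    using e unfolding vanish_small by blast
  have su: "small M (\<lambda>T. {\<omega>. \<exists>a\<in>A. \<bar>dst (pb T a \<omega>) (px T a \<omega>)\<bar> > \<gamma> T} \<union>
        {\<omega>. \<exists>a\<in>A. \<exists>b\<in>B. \<exists>x\<in>P a. dst b x \<le> \<gamma> T \<and>
            \<bar>R T a b x \<omega>\<bar> / (1 + norm (lam T a b x))\<^sup>2 > e})"
    by (rule small_union[OF sg s2])
  show "small M (\<lambda>T. {\<omega>. \<exists>a\<in>A. \<bar>R T a (pb T a \<omega>) (px T a \<omega>) \<omega>\<bar>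
              > e * (1 + norm (lam T a (pb T a \<omega>) (px T a \<omega>)))\<^sup>2})"
  proof (rule small_mono[OF su], intro always_eventually allI ballI impI)
    fix T \<omega> assume w: "\<omega> \<in> space M" and
      "\<omega> \<in> {\<omega>. \<exists>a\<in>A. \<bar>R T a (pb T a \<omega>) (px T a \<omega>) \<omega>\<bar> > e * (1 + norm (lam T a (pb T a \<omega>) (px T a \<omega>)))\<^sup>2}"
    then obtain a where a: "a \<in> A" and big: "\<bar>R T a (pb T a \<omega>) (px T a \<omega>) \<omega>\<bar> > e * (1 + norm (lam T a (pb T a \<omega>) (px T a \<omega>)))\<^sup>2"
      by blast
    have pos: "(1 + norm (lam T a (pb T a \<omega>) (px T a \<omega>)))\<^sup>2 > 0"
      by (smt (verit) norm_ge_zero zero_less_power)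
    show "\<omega> \<in> {\<omega>. \<exists>a\<in>A. \<bar>dst (pb T a \<omega>) (px T a \<omega>)\<bar> > \<gamma> T} \<union>
        {\<omega>. \<exists>a\<in>A. \<exists>b\<in>B. \<exists>x\<in>P a. dst b x \<le> \<gamma> T \<and>
            \<bar>R T a b x \<omega>\<bar> / (1 + norm (lam T a b x))\<^sup>2 > e}"
    proof (cases "\<bar>dst (pb T a \<omega>) (px T a \<omega>)\<bar> > \<gamma> T")
      case True then show ?thesis using a by blast
    next
      case False
      then have "dst (pb T a \<omega>) (px T a \<omega>) \<le> \<gamma> T" by linarith
      moreover have "\<bar>R T a (pb T a \<omega>) (px T a \<omega>) \<omega>\<bar> / (1 + norm (lam T a (pb T a \<omega>) (px T a \<omega>)))\<^sup>2 > e"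
        using big pos by (simp add: less_divide_eq)
      ultimately show ?thesis using a pt[OF a w] by blast
    qed
  qed
qed

lemma R_op:
  assumes raw: "\<forall>e>0. small M (\<lambda>T. {\<omega>. \<exists>a\<in>A. \<bar>Rp T a \<omega>\<bar> > e * (1 + Lp T a \<omega>)\<^sup>2})"
    and bnd: "\<forall>d>0. \<exists>K. pr_lt M d (\<lambda>T. {\<omega>. \<exists>a\<in>A. Lp T a \<omega> > K})"
    and nn: "\<And>T a \<omega>. Lp T a \<omega> \<ge> 0"
  shows "op_unif M A Rp"
  unfolding op_unif_small small_def
proof (intro allI impI)
  fix e d :: real assume e: "e > 0" and d: "d > 0"
  have d2: "d/2 > 0" using d by simp
  obtain K where K: "pr_lt M (d/2) (\<lambda>T. {\<omega>. \<exists>a\<in>A. Lp T a \<omega> > K})" using bnd d2 by blast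
  define K' where "K' = max K 0"
  define e' where "e' = e / (1 + K')\<^sup>2"
  have e': "e' > 0" using e by (simp add: e'_def K'_def)
  have r: "pr_lt M (d/2) (\<lambda>T. {\<omega>. \<exists>a\<in>A. \<bar>Rp T a \<omega>\<bar> > e' * (1 + Lp T a \<omega>)\<^sup>2})"
    using raw e' d unfolding small_def by auto
  have u: "pr_lt M (d/2 + d/2) (\<lambda>T. {\<omega>. \<exists>a\<in>A. Lp T a \<omega> > K} \<union> {\<omega>. \<exists>a\<in>A. \<bar>Rp T a \<omega>\<bar> > e' * (1 + Lp T a \<omega>)\<^sup>2})"
    by (rule pr_lt_union[OF K r])
  show "pr_lt M d (\<lambda>T. {\<omega>. \<exists>a\<in>A. \<bar>Rp T a \<omega>\<bar> > e})"
  proof (rule pr_lt_mono[OF u], intro always_eventually allI ballI impI)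
    fix T \<omega> assume "\<omega> \<in> {\<omega>. \<exists>a\<in>A. \<bar>Rp T a \<omega>\<bar> > e}"
    then obtain a where a: "a \<in> A" "\<bar>Rp T a \<omega>\<bar> > e" by blast
    show "\<omega> \<in> {\<omega>. \<exists>a\<in>A. Lp T a \<omega> > K} \<union> {\<omega>. \<exists>a\<in>A. \<bar>Rp T a \<omega>\<bar> > e' * (1 + Lp T a \<omega>)\<^sup>2}"
    proof (cases "Lp T a \<omega> > K")
      case True then show ?thesis using a by blast
    next
      case False
      then have "Lp T a \<omega> \<le> K'" by (simp add: K'_def)
      then have "(1 + Lp T a \<omega>)\<^sup>2 \<le> (1 + K')\<^sup>2" using nn[of T a \<omega>] by (intro power_mono) auto
      then have "e' * (1 + Lp T a \<omega>)\<^sup>2 \<le> e' * (1 + K')\<^sup>2" using e' by (intro mult_left_mono) auto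
      also have "\<dots> = e" unfolding e'_def K'_def by (simp add: field_simps)
      finally have "e' * (1 + Lp T a \<omega>)\<^sup>2 \<le> e" .
      then have "e' * (1 + Lp T a \<omega>)\<^sup>2 < \<bar>Rp T a \<omega>\<bar>" using a by linarith
      then show ?thesis using a(1) by blast
    qed
  qed simp
qed

lemma comb4:
  assumes "op_unif M A e1" "op_unif M A e2" "op_unif M A e3" "op_unif M A e4"
    and bd: "\<And>T a \<omega>. a \<in> A \<Longrightarrow> \<omega> \<in> space M \<Longrightarrow>
       \<bar>D T a \<omega>\<bar> \<le> \<bar>e1 T a \<omega>\<bar> + \<bar>e2 T a \<omega>\<bar> + \<bar>e3 T a \<omega>\<bar> + \<bar>e4 T a \<omega>\<bar>"
  shows "op_unif M A D"
  unfolding op_unif_small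
proof (intro allI impI)
  fix e :: real assume e: "e > 0"
  have s: "small M (\<lambda>T. {\<omega>. \<exists>a\<in>A. \<bar>ee T a \<omega>\<bar> > e/4})" if "op_unif M A ee" for ee
  proof -
    have "e/4 > 0" using e by simp
    then show ?thesis using that[unfolded op_unif_small] by blast
  qed
  have u: "small M (\<lambda>T. (({\<omega>. \<exists>a\<in>A. \<bar>e1 T a \<omega>\<bar> > e/4} \<union> {\<omega>. \<exists>a\<in>A. \<bar>e2 T a \<omega>\<bar> > e/4})
      \<union> {\<omega>. \<exists>a\<in>A. \<bar>e3 T a \<omega>\<bar> > e/4}) \<union> {\<omega>. \<exists>a\<in>A. \<bar>e4 T a \<omega>\<bar> > e/4})"
    by (intro small_union s assms(1-4))
  show "small M (\<lambda>T. {\<omega>. \<exists>a\<in>A. \<bar>D T a \<omega>\<bar> > e})"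
  proof (rule small_mono[OF u], intro always_eventually allI ballI impI)
    fix T \<omega> assume w: "\<omega> \<in> space M" and "\<omega> \<in> {\<omega>. \<exists>a\<in>A. \<bar>D T a \<omega>\<bar> > e}"
    then obtain a where a: "a \<in> A" "\<bar>D T a \<omega>\<bar> > e" by blast
    have "\<bar>e1 T a \<omega>\<bar> > e/4 \<or> \<bar>e2 T a \<omega>\<bar> > e/4 \<or> \<bar>e3 T a \<omega>\<bar> > e/4 \<or> \<bar>e4 T a \<omega>\<bar> > e/4"
      using bd[of a \<omega> T, OF a(1) w] a(2) by linarith
    then show "\<omega> \<in> (({\<omega>. \<exists>a\<in>A. \<bar>e1 T a \<omega>\<bar> > e/4} \<union> {\<omega>. \<exists>a\<in>A. \<bar>e2 T a \<omega>\<bar> > e/4})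
      \<union> {\<omega>. \<exists>a\<in>A. \<bar>e3 T a \<omega>\<bar> > e/4}) \<union> {\<omega>. \<exists>a\<in>A. \<bar>e4 T a \<omega>\<bar> > e/4}"
      using a(1) by blast
  qed
qed

lemma quad_bound:
  fixes c K0 x :: real
  assumes c: "c > 0" and K0: "K0 \<ge> 0" and x: "x \<ge> 0"
    and h: "-1 \<le> K0*x - (c/2)*x^2 + (c/8)*(1+x)^2"
  shows "x \<le> 4*K0/c + (1 + 4/c) + 1"
proof (rule ccontr)
  define b where "b = 4*K0/c"
  define k where "k = 1 + 4/c"
  have b0: "b \<ge> 0" using c K0 by (simp add: b_def)
  have k0: "k > 0" using c by (simp add: k_def add_pos_pos)
  assume "\<not> ?thesis"
  then have xb: "x > b + k + 1" by (simp add: b_def k_def)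
  have sq1: "(1+x)^2 = 1 + 2*x + x^2" by (simp add: power2_eq_square algebra_simps)
  have sq2: "(x-1)^2 = x^2 - 2*x + 1" by (simp add: power2_eq_square algebra_simps)
  have "(x-1)^2 \<ge> 0" by simp
  then have "(1+x)^2 \<le> 2 + 2*x^2" using sq1 sq2 by linarith
  then have "(c/8)*(1+x)^2 \<le> (c/8)*(2 + 2*x^2)" using c by (intro mult_left_mono) auto
  also have "(c/8)*(2 + 2*x^2) = c/4 + (c/4)*x^2" by (simp add: algebra_simps)
  finally have "(c/8)*(1+x)^2 \<le> c/4 + (c/4)*x^2" .
  moreover have "(c/2)*x^2 = (c/4)*x^2 + (c/4)*x^2" by simp
  ultimately have "(c/4)*x^2 \<le> K0*x + c/4 + 1" using h by linarith
  then have i1: "(4/c) * ((c/4)*x^2) \<le> (4/c) * (K0*x + c/4 + 1)" using c by (intro mult_left_mono) auto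
  have "x^2 = (4/c) * ((c/4)*x^2)" using c by simp
  also have "\<dots> \<le> (4/c) * (K0*x + c/4 + 1)" by (rule i1)
  also have "\<dots> = b*x + k" using c by (simp add: b_def k_def field_simps)
  finally have q: "x^2 \<le> b*x + k" .
  have xp: "x > 1" using xb b0 k0 by linarith
  have "x * x > x * (b + k + 1)" using xb xp by (intro mult_strict_left_mono) auto
  moreover have "x * (b + k + 1) = b*x + k*x + x" by (simp add: algebra_simps)
  moreover have "k*x \<ge> k*1" using k0 xp by (intro mult_left_mono) auto
  ultimately have "x * x > b*x + k" using xp by linarith
  then show False using q by (simp add: power2_eq_square)
qed

lemma sq_bound:
  fixes y W :: real
  assumes "y \<ge> 0" "y^2 \<le> W"
  shows "y \<le> W + 1"
proof (rule ccontr)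
  assume "\<not> ?thesis"
  then have y: "y > W + 1" by simp
  have W: "W \<ge> 0" using assms(2) by (metis zero_le_power2 order_trans)
  have "y * y > y * 1" using y W by (intro mult_strict_left_mono) auto
  then show False using assms y by (simp add: power2_eq_square)
qed

lemma three_union:
  assumes "pr_lt M d P1" "pr_lt M d P2" "pr_lt M d P3"
  shows "pr_lt M (d + d + d) (\<lambda>T. (P1 T \<union> P2 T) \<union> P3 T)"
  by (intro pr_lt_union assms)

lemma mle_bnd:
  fixes u l :: "nat \<Rightarrow> 'a \<Rightarrow> 'w \<Rightarrow> real^'r" and Rr E eta :: "nat \<Rightarrow> 'a \<Rightarrow> 'w \<Rightarrow> real"
    and Im :: "'a \<Rightarrow> real^'r^'r"
  assumes c: "c > 0" and qf: "\<And>a v. a \<in> A \<Longrightarrow> qform (Im a) v \<ge> c * (norm v)^2"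
   and ident: "\<And>T a \<omega>. a \<in> A \<Longrightarrow> \<omega> \<in> space M \<Longrightarrow>
        E T a \<omega> = u T a \<omega> \<bullet> l T a \<omega> - 1/2 * qform (Im a) (l T a \<omega>) + Rr T a \<omega>"
   and lowE: "\<And>T a \<omega>. a \<in> A \<Longrightarrow> \<omega> \<in> space M \<Longrightarrow> E T a \<omega> \<ge> - \<bar>eta T a \<omega>\<bar>"
   and eta: "op_unif M A eta"
   and raw: "\<forall>e>0. small M (\<lambda>T. {\<omega>. \<exists>a\<in>A. \<bar>Rr T a \<omega>\<bar> > e * (1 + norm (l T a \<omega>))\<^sup>2})"
   and tu: "\<forall>d>0. \<exists>K. pr_lt M d (\<lambda>T. {\<omega>. \<exists>a\<in>A. norm (u T a \<omega>) > K})"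
  shows "\<forall>d>0. \<exists>K. pr_lt M d (\<lambda>T. {\<omega>. \<exists>a\<in>A. norm (l T a \<omega>) > K})"
proof (intro allI impI)
  fix d :: real assume d: "d > 0"
  define d3 where "d3 = d/3"
  have d3: "d3 > 0" using d by (simp add: d3_def)
  obtain K0 where K0: "pr_lt M d3 (\<lambda>T. {\<omega>. \<exists>a\<in>A. norm (u T a \<omega>) > K0})" using tu d3 by blast
  define K0' where "K0' = max K0 0"
  have p1: "pr_lt M d3 (\<lambda>T. {\<omega>. \<exists>a\<in>A. \<bar>eta T a \<omega>\<bar> > 1})"
    using eta d3 unfolding op_unif_small small_def by simp
  have "c/8 > 0" using c by simp
  then have p3: "pr_lt M d3 (\<lambda>T. {\<omega>. \<exists>a\<in>A. \<bar>Rr T a \<omega>\<bar> > c/8 * (1 + norm (l T a \<omega>))\<^sup>2})"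
    using raw d3 unfolding small_def by blast
  have u: "pr_lt M (d3 + d3 + d3) (\<lambda>T. ({\<omega>. \<exists>a\<in>A. \<bar>eta T a \<omega>\<bar> > 1} \<union> {\<omega>. \<exists>a\<in>A. norm (u T a \<omega>) > K0})
       \<union> {\<omega>. \<exists>a\<in>A. \<bar>Rr T a \<omega>\<bar> > c/8 * (1 + norm (l T a \<omega>))\<^sup>2})"
    by (rule three_union[OF p1 K0 p3])
  define K1 where "K1 = 4*K0'/c + (1 + 4/c) + 1"
  show "\<exists>K. pr_lt M d (\<lambda>T. {\<omega>. \<exists>a\<in>A. norm (l T a \<omega>) > K})"
  proof (intro exI[of _ K1], rule pr_lt_mono[OF u], intro always_eventually allI ballI impI)
    fix T \<omega> assume w: "\<omega> \<in> space M" and "\<omega> \<in> {\<omega>. \<exists>a\<in>A. norm (l T a \<omega>) > K1}"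
    then obtain a where a: "a \<in> A" and big: "norm (l T a \<omega>) > K1" by blast
    show "\<omega> \<in> ({\<omega>. \<exists>a\<in>A. \<bar>eta T a \<omega>\<bar> > 1} \<union> {\<omega>. \<exists>a\<in>A. norm (u T a \<omega>) > K0})
       \<union> {\<omega>. \<exists>a\<in>A. \<bar>Rr T a \<omega>\<bar> > c/8 * (1 + norm (l T a \<omega>))\<^sup>2}"
    proof (rule ccontr)
      assume "\<not> ?thesis"
      then have h1: "\<bar>eta T a \<omega>\<bar> \<le> 1" and h2: "norm (u T a \<omega>) \<le> K0'"
        and h3: "\<bar>Rr T a \<omega>\<bar> \<le> c/8 * (1 + norm (l T a \<omega>))\<^sup>2"
        using a unfolding K0'_def by (auto simp: not_less)
      define x where "x = norm (l T a \<omega>)"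
      have "u T a \<omega> \<bullet> l T a \<omega> \<le> norm (u T a \<omega>) * x" unfolding x_def by (rule norm_cauchy_schwarz)
      also have "\<dots> \<le> K0' * x" unfolding x_def using h2 by (intro mult_right_mono) auto
      finally have i1: "u T a \<omega> \<bullet> l T a \<omega> \<le> K0' * x" .
      have i2: "qform (Im a) (l T a \<omega>) \<ge> c * x^2" unfolding x_def using qf a by blast
      have "-1 \<le> E T a \<omega>" using lowE[of a \<omega> T, OF a w] h1 by linarith
      also have "\<dots> = u T a \<omega> \<bullet> l T a \<omega> - 1/2 * qform (Im a) (l T a \<omega>) + Rr T a \<omega>" by (rule ident[of a \<omega> T, OF a w])
      also have "\<dots> \<le> K0'*x - (c/2)*x^2 + (c/8)*(1+x)^2"
        using i1 i2 h3 unfolding x_def by auto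
      finally have "-1 \<le> K0'*x - (c/2)*x^2 + (c/8)*(1+x)^2" .
      then have "x \<le> K1" unfolding K1_def using c by (intro quad_bound) (auto simp: K0'_def x_def)
      then show False using big unfolding x_def by simp
    qed
  qed (simp add: d3_def)
qed

lemma q_bnd:
  fixes u l z :: "nat \<Rightarrow> 'a \<Rightarrow> 'w \<Rightarrow> real^'r" and eta :: "nat \<Rightarrow> 'a \<Rightarrow> 'w \<Rightarrow> real"
    and Im :: "'a \<Rightarrow> real^'r^'r"
  assumes c: "c > 0" and qf: "\<And>a v. a \<in> A \<Longrightarrow> qform (Im a) v \<ge> c * (norm v)^2"
   and zu: "\<And>T a \<omega>. a \<in> A \<Longrightarrow> \<omega> \<in> space M \<Longrightarrow> Im a *v z T a \<omega> = u T a \<omega>"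
   and qle: "\<And>T a \<omega>. a \<in> A \<Longrightarrow> \<omega> \<in> space M \<Longrightarrow>
        qform (Im a) (l T a \<omega> - z T a \<omega>) \<le> qform (Im a) (z T a \<omega>) + \<bar>eta T a \<omega>\<bar>"
   and eta: "op_unif M A eta"
   and tu: "\<forall>d>0. \<exists>K. pr_lt M d (\<lambda>T. {\<omega>. \<exists>a\<in>A. norm (u T a \<omega>) > K})"
  shows "\<forall>d>0. \<exists>K. pr_lt M d (\<lambda>T. {\<omega>. \<exists>a\<in>A. norm (l T a \<omega>) > K})"
proof (intro allI impI)
  fix d :: real assume d: "d > 0"
  define d2 where "d2 = d/2"
  have d2: "d2 > 0" using d by (simp add: d2_def)
  obtain K0 where K0: "pr_lt M d2 (\<lambda>T. {\<omega>. \<exists>a\<in>A. norm (u T a \<omega>) > K0})" using tu d2 by blast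
  define K0' where "K0' = max K0 0"
  have p1: "pr_lt M d2 (\<lambda>T. {\<omega>. \<exists>a\<in>A. \<bar>eta T a \<omega>\<bar> > 1})"
    using eta d2 unfolding op_unif_small small_def by simp
  have u: "pr_lt M (d2 + d2) (\<lambda>T. {\<omega>. \<exists>a\<in>A. \<bar>eta T a \<omega>\<bar> > 1} \<union> {\<omega>. \<exists>a\<in>A. norm (u T a \<omega>) > K0})"
    by (rule pr_lt_union[OF p1 K0])
  define W where "W = (K0' * (K0' / c) + 1) / c"
  define K1 where "K1 = K0' / c + (W + 1)"
  show "\<exists>K. pr_lt M d (\<lambda>T. {\<omega>. \<exists>a\<in>A. norm (l T a \<omega>) > K})"
  proof (intro exI[of _ K1], rule pr_lt_mono[OF u], intro always_eventually allI ballI impI)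
    fix T \<omega> assume w: "\<omega> \<in> space M" and "\<omega> \<in> {\<omega>. \<exists>a\<in>A. norm (l T a \<omega>) > K1}"
    then obtain a where a: "a \<in> A" and big: "norm (l T a \<omega>) > K1" by blast
    show "\<omega> \<in> {\<omega>. \<exists>a\<in>A. \<bar>eta T a \<omega>\<bar> > 1} \<union> {\<omega>. \<exists>a\<in>A. norm (u T a \<omega>) > K0}"
    proof (rule ccontr)
      assume "\<not> ?thesis"
      then have h1: "\<bar>eta T a \<omega>\<bar> \<le> 1" and h2: "norm (u T a \<omega>) \<le> K0'"
        using a unfolding K0'_def by (auto simp: not_less)
      define zz where "zz = z T a \<omega>"
      have qz: "qform (Im a) zz = zz \<bullet> u T a \<omega>" unfolding qform_def zz_def using zu[of a \<omega> T, OF a w] by simp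
      also have "\<dots> \<le> norm zz * norm (u T a \<omega>)" by (rule norm_cauchy_schwarz)
      also have "\<dots> \<le> norm zz * K0'" using h2 by (intro mult_left_mono) auto
      finally have qzb: "qform (Im a) zz \<le> norm zz * K0'" .
      have "c * (norm zz)^2 \<le> norm zz * K0'" using qf[OF a, of zz] qzb by linarith
      then have zb: "norm zz \<le> K0' / c"
      proof (cases "norm zz = 0")
        case True then show ?thesis using c by (simp add: K0'_def)
      next
        case False
        then have "c * norm zz \<le> K0'"
          using \<open>c * (norm zz)^2 \<le> norm zz * K0'\<close> by (simp add: power2_eq_square mult.commute mult.left_commute)
        then show ?thesis using c by (simp add: field_simps)
      qed
      have "qform (Im a) zz \<le> K0' * (K0' / c)"
        using qzb zb by (smt (verit) K0'_def max.cobounded2 mult.commute mult_right_mono)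
      then have "c * (norm (l T a \<omega> - zz))^2 \<le> K0' * (K0' / c) + 1"
        using qf[OF a, of "l T a \<omega> - zz"] qle[of a \<omega> T, OF a w] h1 unfolding zz_def by linarith
      then have "(norm (l T a \<omega> - zz))^2 \<le> W" unfolding W_def using c by (simp add: field_simps)
      then have "norm (l T a \<omega> - zz) \<le> W + 1" by (intro sq_bound) auto
      then have "norm (l T a \<omega>) \<le> K1" unfolding K1_def using zb norm_triangle_sub[of "l T a \<omega>" zz] by linarith
      then show False using big by simp
    qed
  qed (simp add: d2_def)
qed

lemma qsym:
  fixes J :: "real^'r^'r"
  assumes "transpose J = J"
  shows "x \<bullet> (J *v y) = y \<bullet> (J *v x)"
  by (metis assms dot_lmul_matrix inner_commute transpose_matrix_vector)

lemma ident_alg: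
  fixes J :: "real^'r^'r"
  assumes sym: "transpose J = J" and zu: "J *v z = u"
  shows "u \<bullet> l - 1/2 * qform J l = 1/2 * qform J z - 1/2 * qform J (l - z)"
proof -
  have "qform J (l + (- z)) = qform J l + 2 * ((- z) \<bullet> (J *v l)) + qform J (- z)"
    by (rule qform_add_sym[OF sym])
  moreover have "(- z) \<bullet> (J *v l) = - (l \<bullet> u)"
    using qsym[OF sym, of z l] zu by simp
  moreover have "qform J (- z) = qform J z" using qform_scale[of J "-1" z] by simp
  ultimately have "qform J (l - z) = qform J l - 2 * (l \<bullet> u) + qform J z" by simp
  then show ?thesis by (simp add: inner_commute algebra_simps)
qed

lemma inv_mul:
  fixes J :: "real^'r^'r"
  assumes c: "c > 0" and qf: "\<And>v. qform J v \<ge> c * (norm v)^2"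
  shows "J *v (matrix_inv J *v u) = u"
proof -
  have "\<forall>x. J *v x = 0 \<longrightarrow> x = 0"
  proof (intro allI impI)
    fix x assume "J *v x = 0"
    then have "qform J x = 0" by (simp add: qform_def)
    then have "c * (norm x)^2 \<le> 0" using qf[of x] by simp
    then have "(norm x)^2 \<le> 0" using c by (simp add: mult_le_0_iff)
    then show "x = 0" by simp
  qed
  then have "\<exists>B. B ** J = mat 1" using matrix_left_invertible_ker by blast
  then have "invertible J" using invertible_left_inverse by blast
  then have "\<exists>A'. J ** A' = mat 1 \<and> A' ** J = mat 1" unfolding invertible_def .
  then have "J ** matrix_inv J = mat 1 \<and> matrix_inv J ** J = mat 1"
    unfolding matrix_inv_def by (rule someI_ex)
  then show ?thesis by (simp add: matrix_vector_mul_assoc)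
qed

lemma star_in:
  assumes setting: "Setting p q1 q2 sg"
    and A1: "Assumption1 M p q1 q2 sg y eps phs PhiT A B Phi mw"
  shows "bstar sg q1 phs \<in> B" "phstar sg q1 phs \<in> Phi"
proof -
  have perm: "sg permutes {..<p+2}" and q: "q1 + q2 = p + 2" using setting by (auto simp: Setting_def)
  have phs: "phs \<in> vinterior (p + 2) PhiT"
    and iff: "\<forall>b\<in>vec q1. \<forall>ph\<in>vec q2. (b \<in> B \<and> ph \<in> Phi) \<longleftrightarrow> Pinv sg (vcat q1 b ph) \<in> PhiT"
    using A1 unfolding Assumption1_def by auto
  have phsP: "phs \<in> PhiT" and phsv: "phs \<in> vec (p+2)" using phs by (auto simp: vinterior_def)
  have bv: "bstar sg q1 phs \<in> vec q1" by (simp add: bstar_def vtake_def vec_def)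
  have pv: "phstar sg q1 phs \<in> vec q2"
    unfolding vec_def
  proof (intro CollectI allI impI)
    fix i assume "q2 \<le> i"
    then have "i + q1 \<notin> {..<p+2}" using q by auto
    then have "sg (i + q1) = i + q1" using perm by (simp add: permutes_not_in)
    moreover have "phs (i + q1) = 0" using phsv \<open>i + q1 \<notin> {..<p+2}\<close> by (simp add: vec_def)
    ultimately show "phstar sg q1 phs i = 0" by (simp add: phstar_def vdrop_def Pmap_def)
  qed
  have "vcat q1 (bstar sg q1 phs) (phstar sg q1 phs) = Pmap sg phs"
    by (rule ext) (simp add: vcat_def bstar_def phstar_def vtake_def vdrop_def)
  moreover have "Pinv sg (Pmap sg phs) = phs"
    by (rule ext) (simp add: Pinv_def Pmap_def permutes_inverses(1)[OF perm])
  ultimately have "Pinv sg (vcat q1 (bstar sg q1 phs) (phstar sg q1 phs)) \<in> PhiT" using phsP by simp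
  then show "bstar sg q1 phs \<in> B" "phstar sg q1 phs \<in> Phi" using iff bv pv by blast+
qed

lemma past_meas:
  assumes f: "f \<in> borel_measurable (past_sigma M y T)" and ym: "\<forall>t. y t \<in> borel_measurable M"
  shows "f \<in> borel_measurable M"
proof (rule measurable_from_subalg[OF _ f])
  have G: "{y s -` X \<inter> space M | s X. s \<le> T \<and> X \<in> sets borel} \<subseteq> sets M"
    using ym by (auto intro: measurable_sets)
  show "subalgebra M (past_sigma M y T)"
    unfolding subalgebra_def past_sigma_def
    using G sets.sigma_sets_subset[of _ M] by (auto simp: space_measure_of_conv sets_measure_of_conv)
qed

lemma ident_dist:
  fixes th :: "nat \<Rightarrow> 'a \<Rightarrow> 'w \<Rightarrow> real^'r" and dd :: "nat \<Rightarrow> 'a \<Rightarrow> 'w \<Rightarrow> real"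
  assumes bnd: "\<forall>d>0. \<exists>K. pr_lt M d (\<lambda>T. {\<omega>. \<exists>a\<in>A. norm (sqrt (real T) *\<^sub>R th T a \<omega>) > K})"
    and idf: "\<And>e. e > 0 \<Longrightarrow> \<exists>d>0. \<forall>T. \<forall>a\<in>A. \<forall>\<omega>\<in>space M. dd T a \<omega> \<ge> e \<longrightarrow> norm (th T a \<omega>) \<ge> d"
    and nn: "\<And>T a \<omega>. dd T a \<omega> \<ge> 0"
  shows "op_unif M A dd"
  unfolding op_unif_small small_def
proof (intro allI impI)
  fix e d' :: real assume e: "e > 0" and d': "d' > 0"
  obtain \<delta> where \<delta>: "\<delta> > 0" "\<forall>T. \<forall>a\<in>A. \<forall>\<omega>\<in>space M. dd T a \<omega> \<ge> e \<longrightarrow> norm (th T a \<omega>) \<ge> \<delta>"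
    using idf[OF e] by blast
  obtain K where K: "pr_lt M d' (\<lambda>T. {\<omega>. \<exists>a\<in>A. norm (sqrt (real T) *\<^sub>R th T a \<omega>) > K})"
    using bnd d' by blast
  define K' where "K' = max K 0"
  obtain T0 :: nat where T0: "(K' / \<delta>)^2 < real T0" using reals_Archimedean2 by blast
  show "pr_lt M d' (\<lambda>T. {\<omega>. \<exists>a\<in>A. \<bar>dd T a \<omega>\<bar> > e})"
  proof (rule pr_lt_mono[OF K])
    show "eventually (\<lambda>T. \<forall>\<omega>\<in>space M. \<omega> \<in> {\<omega>. \<exists>a\<in>A. \<bar>dd T a \<omega>\<bar> > e} \<longrightarrow>
        \<omega> \<in> {\<omega>. \<exists>a\<in>A. norm (sqrt (real T) *\<^sub>R th T a \<omega>) > K}) sequentially"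
      unfolding eventually_sequentially
    proof (intro exI[of _ T0] allI impI ballI)
      fix T \<omega> assume T: "T0 \<le> T" and w: "\<omega> \<in> space M" and "\<omega> \<in> {\<omega>. \<exists>a\<in>A. \<bar>dd T a \<omega>\<bar> > e}"
      then obtain a where a: "a \<in> A" "\<bar>dd T a \<omega>\<bar> > e" by blast
      have ge: "dd T a \<omega> \<ge> e" using a nn[of T a \<omega>] by simp
      have K'0: "K' \<ge> 0" by (simp add: K'_def)
      have "(K' / \<delta>)^2 < real T" using T0 T by linarith
      then have "sqrt ((K' / \<delta>)^2) < sqrt (real T)" by (rule real_sqrt_less_mono)
      then have "K' / \<delta> < sqrt (real T)" using K'0 \<delta>(1) by simp
      then have sK: "K' < sqrt (real T) * \<delta>" using \<delta>(1) by (simp add: divide_less_eq mult.commute)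
      have "norm (th T a \<omega>) \<ge> \<delta>" using \<delta>(2) a w ge by blast
      then have "sqrt (real T) * \<delta> \<le> sqrt (real T) * norm (th T a \<omega>)" by (intro mult_left_mono) auto
      then have "norm (sqrt (real T) *\<^sub>R th T a \<omega>) > K" using sK by (simp add: K'_def)
      then show "\<omega> \<in> {\<omega>. \<exists>a\<in>A. norm (sqrt (real T) *\<^sub>R th T a \<omega>) > K}" using a by blast
    qed
  qed simp
qed

theorem lemma2:
  fixes M :: "'w measure" and N :: "'v measure"
    and p q1 q2 :: nat and sg :: "nat \<Rightarrow> nat"
    and y eps :: "int \<Rightarrow> 'w \<Rightarrow> real"
    and phs :: "nat \<Rightarrow> real" and PhiT B Phi :: "(nat \<Rightarrow> real) set"
    and A :: "'a::euclidean_space set"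
    and mw :: "int \<Rightarrow> 'a \<Rightarrow> (nat \<Rightarrow> real) \<Rightarrow> (nat \<Rightarrow> real) \<Rightarrow> (nat \<Rightarrow> real) \<Rightarrow> 'w \<Rightarrow> real"
    and bh phh vph bq piq vq :: "nat \<Rightarrow> 'a \<Rightarrow> 'w \<Rightarrow> (nat \<Rightarrow> real)"
    and pimap piinv :: "'a \<Rightarrow> (nat \<Rightarrow> real) \<times> (nat \<Rightarrow> real) \<Rightarrow> (nat \<Rightarrow> real) \<times> (nat \<Rightarrow> real)"
    and th :: "'a \<Rightarrow> (nat \<Rightarrow> real) \<Rightarrow> (nat \<Rightarrow> real) \<Rightarrow> (nat \<Rightarrow> real) \<Rightarrow> real^'r::finite"
    and s :: "nat \<Rightarrow> 'a \<Rightarrow> 'w \<Rightarrow> real^'r"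
    and S :: "'a \<Rightarrow> 'v \<Rightarrow> real^'r"
    and I :: "'a \<Rightarrow> real^'r^'r"
  assumes setting: "Setting p q1 q2 sg"
    and A1: "Assumption1 M p q1 q2 sg y eps phs PhiT A B Phi mw"
    and A2: "Assumption2 M p q1 q2 sg y phs A B Phi mw bh phh vph"
    and A3: "Assumption3 M q1 q2 sg phs A Phi pimap piinv bh phh vph"
    and A4: "Assumption4 M q1 q2 A B Phi mw pimap piinv"
    and A5: "Assumption5 M p q1 q2 sg y phs A B Phi mw pimap piinv th s N S I"
    and q_in: "\<forall>T. \<forall>a\<in>A. \<forall>\<omega>\<in>space M. bq T a \<omega> \<in> B \<and> (piq T a \<omega>, vq T a \<omega>) \<in> pimap a ` (Phi \<times> Phi)"
    and q_min: "op_unif M A (\<lambda>T a \<omega>.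
        qform (I a) (sqrt (real T) *\<^sub>R th a (bq T a \<omega>) (piq T a \<omega>) (vq T a \<omega>)
                     - matrix_inv (I a) *v ((1 / sqrt (real T)) *\<^sub>R ST s T a \<omega>))
        - (INF l\<in>(\<lambda>x. sqrt (real T) *\<^sub>R x) ` ((\<lambda>(b, x). th a b (fst x) (snd x)) ` (B \<times> pimap a ` (Phi \<times> Phi))).
             qform (I a) (l - matrix_inv (I a) *v ((1 / sqrt (real T)) *\<^sub>R ST s T a \<omega>))))"
  shows "op_unif M A (\<lambda>T a \<omega>.
        (LpiT p sg q1 y mw piinv T a (bh T a \<omega>)
              (fst (pimap a (phh T a \<omega>, vph T a \<omega>))) (snd (pimap a (phh T a \<omega>, vph T a \<omega>))) \<omega>
         - LpiT p sg q1 y mw piinv T a (bstar sg q1 phs) (phstar sg q1 phs) vzero \<omega>)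
        - ((1/2) * qform (I a) (matrix_inv (I a) *v ((1 / sqrt (real T)) *\<^sub>R ST s T a \<omega>))
           - (1/2) * qform (I a) (sqrt (real T) *\<^sub>R th a (bq T a \<omega>) (piq T a \<omega>) (vq T a \<omega>)
                                  - matrix_inv (I a) *v ((1 / sqrt (real T)) *\<^sub>R ST s T a \<omega>))))"
proof -
  define bs where "bs = bstar sg q1 phs"
  define ps where "ps = phstar sg q1 phs"
  have PM: "prob_space M" and cA: "compact A" and ym: "\<forall>t. y t \<in> borel_measurable M"
    using A1 unfolding Assumption1_def by auto
  interpret M: prob_space M by (rule PM)
  have bsB: "bs \<in> B" and psP: "ps \<in> Phi" using star_in[OF setting A1] by (auto simp: bs_def ps_def)
  have A2i: "\<forall>T. \<forall>a\<in>A. \<forall>\<omega>\<in>space M. bh T a \<omega> \<in> B \<and> phh T a \<omega> \<in> Phi \<and> vph T a \<omega> \<in> Phi"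
    and A2o: "op_unif M A (\<lambda>T a \<omega>. LT p sg q1 y mw T a (bh T a \<omega>) (phh T a \<omega>) (vph T a \<omega>) \<omega>
                        - (SUP x\<in>B \<times> Phi \<times> Phi. LT p sg q1 y mw T a (fst x) (fst (snd x)) (snd (snd x)) \<omega>))"
    using A2 unfolding Assumption2_def by blast+
  have homeo: "\<And>a. a \<in> A \<Longrightarrow> homeomorphism (Phi \<times> Phi) (pimap a ` (Phi \<times> Phi)) (pimap a) (piinv a)"
    and pstar: "\<And>a. a \<in> A \<Longrightarrow> pimap a (ps, ps) = (ps, vzero)"
    and A3o: "op_unif M A (\<lambda>T a \<omega>. dist3 q1 q2 (bh T a \<omega>)
                          (fst (pimap a (phh T a \<omega>, vph T a \<omega>))) (snd (pimap a (phh T a \<omega>, vph T a \<omega>)))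
                          (bstar sg q1 phs) (phstar sg q1 phs) vzero)"
    using A3 unfolding Assumption3_def ps_def by blast+
  note A5u = A5[unfolded Assumption5_def]
  have th0: "\<forall>a\<in>A. th a bs ps vzero = 0"
    using A5u unfolding bs_def ps_def by (elim conjE) assumption
  have idf: "\<forall>e>0. \<exists>d>0. \<forall>a\<in>A. \<forall>b\<in>B. \<forall>x\<in>pimap a ` (Phi \<times> Phi).
        dist3 q1 q2 b (fst x) (snd x) (bstar sg q1 phs) (phstar sg q1 phs) vzero \<ge> e
        \<longrightarrow> norm (th a b (fst x) (snd x)) \<ge> d"
    using A5u unfolding bs_def ps_def by (elim conjE) assumption
  have STm: "\<forall>T. \<forall>a\<in>A. ST s T a \<in> borel_measurable (past_sigma M y (int T))"
    using A5u unfolding bs_def ps_def by (elim conjE) assumption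
  have STc: "\<forall>T. \<forall>\<omega>\<in>space M. continuous_on A (\<lambda>a. ST s T a \<omega>)"
    using A5u unfolding bs_def ps_def by (elim conjE) assumption
  have wc: "weak_conv_unif A M (\<lambda>T a \<omega>. (1 / sqrt (real T)) *\<^sub>R ST s T a \<omega>) N S"
    using A5u unfolding bs_def ps_def by (elim conjE) assumption
  have PN: "prob_space N"
    using A5u unfolding bs_def ps_def by (elim conjE) assumption
  have gp: "gaussian_process A N S"
    using A5u unfolding bs_def ps_def by (elim conjE) assumption
  have Sc: "AE \<omega> in N. continuous_on A (\<lambda>a. S a \<omega>)"
    using A5u unfolding bs_def ps_def by (elim conjE) assumption
  have sym: "\<forall>a\<in>A. transpose (I a) = I a"
    using A5u unfolding bs_def ps_def by (elim conjE) assumption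
  have lmin: "\<exists>c>0. \<forall>a\<in>A. lam_min (I a) \<ge> c"
    using A5u unfolding bs_def ps_def by (elim conjE) assumption
  have A5iv: "\<forall>\<gamma> :: nat \<Rightarrow> real. (\<forall>T. \<gamma> T > 0) \<and> \<gamma> \<longlonglongrightarrow> 0 \<longrightarrow>
        vanish_p M (\<lambda>T e. {\<omega>. \<exists>a\<in>A. \<exists>b\<in>B. \<exists>x\<in>pimap a ` (Phi \<times> Phi).
            dist3 q1 q2 b (fst x) (snd x) (bstar sg q1 phs) (phstar sg q1 phs) vzero \<le> \<gamma> T \<and>
            \<bar>RT p sg q1 y mw piinv phs th s I T a b (fst x) (snd x) \<omega>\<bar>
              / (1 + norm (sqrt (real T) *\<^sub>R th a b (fst x) (snd x)))\<^sup>2 > e})"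
    using A5u unfolding bs_def ps_def by (elim conjE) assumption
  obtain c where c: "c > 0" "\<forall>a\<in>A. lam_min (I a) \<ge> c" using lmin by blast
  have qf: "\<And>a v. a \<in> A \<Longrightarrow> qform (I a) v \<ge> c * (norm v)^2"
    using qform_lower sym c by blast
  define U where "U T a \<omega> = (1 / sqrt (real T)) *\<^sub>R ST s T a \<omega>" for T a \<omega>
  define Z where "Z T a \<omega> = matrix_inv (I a) *v U T a \<omega>" for T a \<omega>
  define lam where "lam T a b x = sqrt (real T) *\<^sub>R th a b (fst x) (snd x)"
    for T a b and x :: "(nat \<Rightarrow> real) \<times> (nat \<Rightarrow> real)"
  define Lp where "Lp T a b x \<omega> = LpiT p sg q1 y mw piinv T a b (fst x) (snd x) \<omega>"
    for T a b and x :: "(nat \<Rightarrow> real) \<times> (nat \<Rightarrow> real)" and \<omega>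
  define L0 where "L0 T a \<omega> = LpiT p sg q1 y mw piinv T a bs ps vzero \<omega>" for T a \<omega>
  define Rf where "Rf T a b x \<omega> = RT p sg q1 y mw piinv phs th s I T a b (fst x) (snd x) \<omega>"
    for T a b and x :: "(nat \<Rightarrow> real) \<times> (nat \<Rightarrow> real)" and \<omega>
  define xh where "xh T a \<omega> = pimap a (phh T a \<omega>, vph T a \<omega>)" for T a \<omega>
  define xq where "xq T a \<omega> = (piq T a \<omega>, vq T a \<omega>)" for T a \<omega>
  define SUPf where "SUPf T a \<omega> = (SUP x\<in>B \<times> Phi \<times> Phi. LT p sg q1 y mw T a (fst x) (fst (snd x)) (snd (snd x)) \<omega>)" for T a \<omega>
  define INFf where "INFf T a \<omega> = (INF l\<in>(\<lambda>x. sqrt (real T) *\<^sub>R x) ` ((\<lambda>(b, x). th a b (fst x) (snd x)) ` (B \<times> pimap a ` (Phi \<times> Phi))).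
             qform (I a) (l - Z T a \<omega>))" for T a \<omega>
  define e1 where "e1 T a \<omega> = LT p sg q1 y mw T a (bh T a \<omega>) (phh T a \<omega>) (vph T a \<omega>) \<omega> - SUPf T a \<omega>" for T a \<omega>
  define e2 where "e2 T a \<omega> = qform (I a) (lam T a (bq T a \<omega>) (xq T a \<omega>) - Z T a \<omega>) - INFf T a \<omega>" for T a \<omega>
  define dstf where "dstf b x = dist3 q1 q2 b (fst x) (snd x) bs ps vzero"
    for b and x :: "(nat \<Rightarrow> real) \<times> (nat \<Rightarrow> real)"
  have e1o: "op_unif M A e1" using A2o unfolding e1_def SUPf_def .
  have e2o: "op_unif M A e2" using q_min unfolding e2_def INFf_def lam_def xq_def Z_def U_def by simp
  have ZU: "\<And>T a \<omega>. a \<in> A \<Longrightarrow> I a *v Z T a \<omega> = U T a \<omega>"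
    unfolding Z_def using inv_mul c(1) qf by blast
  have P1': "Lp T a b x \<omega> - L0 T a \<omega> = U T a \<omega> \<bullet> lam T a b x - 1/2 * qform (I a) (lam T a b x) + Rf T a b x \<omega>"
    for T a b x \<omega>
    unfolding Lp_def L0_def Rf_def RT_def U_def lam_def bs_def ps_def by simp
  have P1: "Lp T a b x \<omega> - L0 T a \<omega> = 1/2 * qform (I a) (Z T a \<omega>) - 1/2 * qform (I a) (lam T a b x - Z T a \<omega>) + Rf T a b x \<omega>"
    if "a \<in> A" for T a b x \<omega>
    using P1'[of T a b x \<omega>] ident_alg[of "I a" "Z T a \<omega>" "U T a \<omega>" "lam T a b x"] sym that ZU[OF that]
    by simp
  have LpLT: "Lp T a b (pimap a w) \<omega> = LT p sg q1 y mw T a b (fst w) (snd w) \<omega>"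
    if "a \<in> A" "w \<in> Phi \<times> Phi" for T a b w \<omega>
    using homeomorphism_apply1[OF homeo[OF that(1)] that(2)] by (simp add: Lp_def LpiT_def)
  have L0eq: "L0 T a \<omega> = LT p sg q1 y mw T a bs ps ps \<omega>" if "a \<in> A" for T a \<omega>
  proof -
    have "L0 T a \<omega> = Lp T a bs (pimap a (ps, ps)) \<omega>" using pstar[OF that] by (simp add: L0_def Lp_def)
    also have "\<dots> = LT p sg q1 y mw T a bs ps ps \<omega>" using LpLT[OF that, of "(ps, ps)"] psP by simp
    finally show ?thesis .
  qed
  have leSUP: "LT p sg q1 y mw T a b (fst w) (snd w) \<omega> \<le> SUPf T a \<omega>"
    if "a \<in> A" "\<omega> \<in> space M" "b \<in> B" "w \<in> Phi \<times> Phi" for T a b w \<omega>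
  proof -
    have "LT p sg q1 y mw T a b (fst w) (snd w) \<omega> =
        (\<lambda>x. LT p sg q1 y mw T a (fst x) (fst (snd x)) (snd (snd x)) \<omega>) (b, w)" by simp
    also have "\<dots> \<le> SUPf T a \<omega>" unfolding SUPf_def
      by (rule cSUP_upper) (use that LT_bdd[OF A1 that(1,2)] in auto)
    finally show ?thesis .
  qed
  have qnn: "qform (I a) v \<ge> 0" if "a \<in> A" for a v
    using qf[OF that, of v] c(1) by (smt (verit) mult_nonneg_nonneg zero_le_power2)
  have INFle: "INFf T a \<omega> \<le> qform (I a) (lam T a b z - Z T a \<omega>)"
    if "a \<in> A" "b \<in> B" "z \<in> pimap a ` (Phi \<times> Phi)" for T a b z \<omega>
  proof -
    have "th a b (fst z) (snd z) \<in> (\<lambda>(b, x). th a b (fst x) (snd x)) ` (B \<times> pimap a ` (Phi \<times> Phi))"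
      using that by (intro rev_image_eqI[of "(b, z)"]) auto
    then have mem: "lam T a b z \<in> (\<lambda>x. sqrt (real T) *\<^sub>R x) ` ((\<lambda>(b, x). th a b (fst x) (snd x)) ` (B \<times> pimap a ` (Phi \<times> Phi)))"
      unfolding lam_def by (rule imageI)
    show ?thesis unfolding INFf_def
      by (rule cINF_lower[OF _ mem]) (rule bdd_belowI2[where m=0], rule qnn[OF that(1)])
  qed
  have lam0: "lam T a bs (ps, vzero) = 0" if "a \<in> A" for T a
    using th0 that by (simp add: lam_def)
  have pvz: "(ps, vzero) \<in> pimap a ` (Phi \<times> Phi)" if "a \<in> A" for a
  proof -
    have "(ps, ps) \<in> Phi \<times> Phi" using psP by simp
    then have "pimap a (ps, ps) \<in> pimap a ` (Phi \<times> Phi)" by (rule imageI)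
    then show ?thesis using pstar[OF that] by simp
  qed
  have Sm: "(\<lambda>\<omega>. norm (S a \<omega>)) \<in> borel_measurable N" if a: "a \<in> A" for a
  proof -
    have "S a \<in> borel_measurable N"
    proof (rule borel_measurable_euclidean_space[THEN iffD2], rule ballI)
      fix i :: "real^'r" assume "i \<in> Basis"
      have "centered_normal N (\<lambda>\<omega>. \<Sum>a'\<in>{a}. (\<lambda>_. i) a' \<bullet> S a' \<omega>)"
        using gp[unfolded gaussian_process_def, rule_format, of "{a}" "\<lambda>_. i"] a by simp
      then have "(\<lambda>\<omega>. i \<bullet> S a \<omega>) \<in> borel_measurable N" by (simp add: centered_normal_def)
      then show "(\<lambda>\<omega>. S a \<omega> \<bullet> i) \<in> borel_measurable N" by (simp add: inner_commute)
    qed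
    then show ?thesis by (rule measurable_compose[OF _ borel_measurable_norm])
  qed
  have Um: "(\<lambda>\<omega>. norm (U T a \<omega>)) \<in> borel_measurable M" if a: "a \<in> A" for T a
  proof -
    have "ST s T a \<in> borel_measurable M" using past_meas STm a ym by blast
    then have "U T a \<in> borel_measurable M" unfolding U_def
      by (intro borel_measurable_scaleR borel_measurable_const)
    then show ?thesis by (rule measurable_compose[OF _ borel_measurable_norm])
  qed
  have Uc: "continuous_on A (\<lambda>a. U T a \<omega>)" if "\<omega> \<in> space M" for T \<omega>
    unfolding U_def using STc that by (intro continuous_intros) auto
  have wcU: "weak_conv_unif A M U N S" using wc unfolding U_def .
  have tu: "\<forall>d>0. \<exists>K. pr_lt M d (\<lambda>T. {\<omega>. \<exists>a\<in>A. norm (U T a \<omega>) > K})"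
    by (rule tight[OF PM PN cA Um Uc wcU Sm Sc])
  have A5iv': "\<forall>\<gamma> :: nat \<Rightarrow> real. (\<forall>T. \<gamma> T > 0) \<and> \<gamma> \<longlonglongrightarrow> 0 \<longrightarrow>
        vanish_p M (\<lambda>T e. {\<omega>. \<exists>a\<in>A. \<exists>b\<in>B. \<exists>x\<in>(\<lambda>a. pimap a ` (Phi \<times> Phi)) a. dstf b x \<le> \<gamma> T \<and>
            \<bar>Rf T a b x \<omega>\<bar> / (1 + norm (lam T a b x))\<^sup>2 > e})"
    using A5iv unfolding dstf_def Rf_def lam_def bs_def ps_def by simp
  define lh where "lh T a \<omega> = lam T a (bh T a \<omega>) (xh T a \<omega>)" for T a \<omega>
  define Rh where "Rh T a \<omega> = Rf T a (bh T a \<omega>) (xh T a \<omega>) \<omega>" for T a \<omega>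
  have pth: "bh T a \<omega> \<in> B \<and> xh T a \<omega> \<in> (\<lambda>a. pimap a ` (Phi \<times> Phi)) a"
    if "a \<in> A" "\<omega> \<in> space M" for T a \<omega>
    using A2i that unfolding xh_def by blast
  have ddh: "op_unif M A (\<lambda>T a \<omega>. dstf (bh T a \<omega>) (xh T a \<omega>))"
    using A3o unfolding dstf_def xh_def bs_def ps_def .
  have rawh: "\<forall>e>0. small M (\<lambda>T. {\<omega>. \<exists>a\<in>A. \<bar>Rh T a \<omega>\<bar> > e * (1 + norm (lh T a \<omega>))\<^sup>2})"
    using R_raw[of M A B "\<lambda>a. pimap a ` (Phi \<times> Phi)" dstf Rf lam bh xh, OF A5iv' pth ddh]
    unfolding Rh_def lh_def .
  have identh: "Lp T a (bh T a \<omega>) (xh T a \<omega>) \<omega> - L0 T a \<omega> = U T a \<omega> \<bullet> lh T a \<omega> - 1/2 * qform (I a) (lh T a \<omega>) + Rh T a \<omega>"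
    if "a \<in> A" "\<omega> \<in> space M" for T a \<omega>
    unfolding lh_def Rh_def by (rule P1')
  have Lph: "Lp T a (bh T a \<omega>) (xh T a \<omega>) \<omega> = LT p sg q1 y mw T a (bh T a \<omega>) (phh T a \<omega>) (vph T a \<omega>) \<omega>"
    if "a \<in> A" "\<omega> \<in> space M" for T a \<omega>
    using LpLT[OF that(1), of "(phh T a \<omega>, vph T a \<omega>)"] A2i that unfolding xh_def by simp
  have lowEh: "Lp T a (bh T a \<omega>) (xh T a \<omega>) \<omega> - L0 T a \<omega> \<ge> - \<bar>e1 T a \<omega>\<bar>"
    if "a \<in> A" "\<omega> \<in> space M" for T a \<omega>
  proof -
    have "L0 T a \<omega> \<le> SUPf T a \<omega>"
      using L0eq[OF that(1)] leSUP[OF that bsB, of "(ps, ps)" T] psP by simp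
    then show ?thesis using Lph[OF that, of T] unfolding e1_def by linarith
  qed
  have bndh: "\<forall>d>0. \<exists>K. pr_lt M d (\<lambda>T. {\<omega>. \<exists>a\<in>A. norm (lh T a \<omega>) > K})"
    by (rule mle_bnd[OF c(1) qf identh lowEh e1o rawh tu])
  have Rho: "op_unif M A Rh"
    by (rule R_op[OF rawh bndh]) simp
  define lq where "lq T a \<omega> = lam T a (bq T a \<omega>) (xq T a \<omega>)" for T a \<omega>
  define Rq where "Rq T a \<omega> = Rf T a (bq T a \<omega>) (xq T a \<omega>) \<omega>" for T a \<omega>
  have ptq: "bq T a \<omega> \<in> B \<and> xq T a \<omega> \<in> (\<lambda>a. pimap a ` (Phi \<times> Phi)) a"
    if "a \<in> A" "\<omega> \<in> space M" for T a \<omega>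
    using q_in that unfolding xq_def by blast
  have qle: "qform (I a) (lq T a \<omega> - Z T a \<omega>) \<le> qform (I a) (Z T a \<omega>) + \<bar>e2 T a \<omega>\<bar>"
    if "a \<in> A" "\<omega> \<in> space M" for T a \<omega>
  proof -
    have "INFf T a \<omega> \<le> qform (I a) (lam T a bs (ps, vzero) - Z T a \<omega>)"
      by (rule INFle[OF that(1) bsB pvz[OF that(1)]])
    also have "\<dots> = qform (I a) (Z T a \<omega>)"
      using lam0[OF that(1)] qform_scale[of "I a" "-1" "Z T a \<omega>"] by simp
    finally show ?thesis unfolding e2_def lq_def by linarith
  qed
  have bndq: "\<forall>d>0. \<exists>K. pr_lt M d (\<lambda>T. {\<omega>. \<exists>a\<in>A. norm (lq T a \<omega>) > K})"
    by (rule q_bnd[OF c(1) qf ZU qle e2o tu])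
  have ddq: "op_unif M A (\<lambda>T a \<omega>. dstf (bq T a \<omega>) (xq T a \<omega>))"
  proof (rule ident_dist[where th="\<lambda>T a \<omega>. th a (bq T a \<omega>) (fst (xq T a \<omega>)) (snd (xq T a \<omega>))"])
    show "\<forall>d>0. \<exists>K. pr_lt M d (\<lambda>T. {\<omega>. \<exists>a\<in>A. norm (sqrt (real T) *\<^sub>R th a (bq T a \<omega>) (fst (xq T a \<omega>)) (snd (xq T a \<omega>))) > K})"
      using bndq unfolding lq_def lam_def .
    show "\<exists>d>0. \<forall>T. \<forall>a\<in>A. \<forall>\<omega>\<in>space M. dstf (bq T a \<omega>) (xq T a \<omega>) \<ge> e \<longrightarrow>
        norm (th a (bq T a \<omega>) (fst (xq T a \<omega>)) (snd (xq T a \<omega>))) \<ge> d" if e: "e > 0" for e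
    proof -
      obtain d where d: "d > 0" "\<forall>a\<in>A. \<forall>b\<in>B. \<forall>x\<in>pimap a ` (Phi \<times> Phi).
        dist3 q1 q2 b (fst x) (snd x) (bstar sg q1 phs) (phstar sg q1 phs) vzero \<ge> e
        \<longrightarrow> norm (th a b (fst x) (snd x)) \<ge> d" using idf e by blast
      show ?thesis
      proof (intro exI[of _ d] conjI allI ballI impI)
        show "d > 0" by (rule d(1))
        fix T a \<omega> assume a: "a \<in> A" and w: "\<omega> \<in> space M"
          and ge: "dstf (bq T a \<omega>) (xq T a \<omega>) \<ge> e"
        have b: "bq T a \<omega> \<in> B" and x: "xq T a \<omega> \<in> pimap a ` (Phi \<times> Phi)"
          using ptq[OF a w, of T] by auto
        show "norm (th a (bq T a \<omega>) (fst (xq T a \<omega>)) (snd (xq T a \<omega>))) \<ge> d"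
          using d(2)[rule_format, OF a b x] ge by (simp add: dstf_def bs_def ps_def)
      qed
    qed
    show "\<And>T a \<omega>. dstf (bq T a \<omega>) (xq T a \<omega>) \<ge> 0" by (simp add: dstf_def dist3_def)
  qed
  have rawq: "\<forall>e>0. small M (\<lambda>T. {\<omega>. \<exists>a\<in>A. \<bar>Rq T a \<omega>\<bar> > e * (1 + norm (lq T a \<omega>))\<^sup>2})"
    using R_raw[of M A B "\<lambda>a. pimap a ` (Phi \<times> Phi)" dstf Rf lam bq xq, OF A5iv' ptq ddq]
    unfolding Rq_def lq_def .
  have Rqo: "op_unif M A Rq"
    by (rule R_op[OF rawq bndq]) simp
  show ?thesis
  proof (rule comb4[OF e1o e2o Rho Rqo])
    fix T a \<omega> assume a: "a \<in> A" and w: "\<omega> \<in> space M"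
    have Uq: "(1 / sqrt (real T)) *\<^sub>R ST s T a \<omega> = U T a \<omega>" by (simp add: U_def)
    have h1: "Lp T a (bh T a \<omega>) (xh T a \<omega>) \<omega> - L0 T a \<omega> = 1/2 * qform (I a) (Z T a \<omega>) - 1/2 * qform (I a) (lh T a \<omega> - Z T a \<omega>) + Rh T a \<omega>"
      unfolding lh_def Rh_def by (rule P1[OF a])
    have h2: "Lp T a (bq T a \<omega>) (xq T a \<omega>) \<omega> - L0 T a \<omega> = 1/2 * qform (I a) (Z T a \<omega>) - 1/2 * qform (I a) (lq T a \<omega> - Z T a \<omega>) + Rq T a \<omega>"
      unfolding lq_def Rq_def by (rule P1[OF a])
    have h3: "qform (I a) (lq T a \<omega> - Z T a \<omega>) = INFf T a \<omega> + e2 T a \<omega>" unfolding e2_def lq_def by simp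
    have h4: "INFf T a \<omega> \<le> qform (I a) (lh T a \<omega> - Z T a \<omega>)"
      unfolding lh_def by (rule INFle) (use a pth[OF a w, of T] in auto)
    have h5: "Lp T a (bh T a \<omega>) (xh T a \<omega>) \<omega> = SUPf T a \<omega> + e1 T a \<omega>"
      using Lph[OF a w, of T] unfolding e1_def by simp
    have h6: "Lp T a (bq T a \<omega>) (xq T a \<omega>) \<omega> \<le> SUPf T a \<omega>"
    proof -
      obtain w' where w': "w' \<in> Phi \<times> Phi" "xq T a \<omega> = pimap a w'" using ptq[OF a w, of T] by blast
      have "Lp T a (bq T a \<omega>) (xq T a \<omega>) \<omega> = LT p sg q1 y mw T a (bq T a \<omega>) (fst w') (snd w') \<omega>"
        unfolding w'(2) by (rule LpLT[OF a w'(1)])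
      also have "\<dots> \<le> SUPf T a \<omega>" by (rule leSUP[OF a w _ w'(1)]) (use ptq[OF a w, of T] in auto)
      finally show ?thesis .
    qed
    have tgt: "LpiT p sg q1 y mw piinv T a (bh T a \<omega>)
              (fst (pimap a (phh T a \<omega>, vph T a \<omega>))) (snd (pimap a (phh T a \<omega>, vph T a \<omega>))) \<omega>
         - LpiT p sg q1 y mw piinv T a (bstar sg q1 phs) (phstar sg q1 phs) vzero \<omega>
        - ((1/2) * qform (I a) (matrix_inv (I a) *v ((1 / sqrt (real T)) *\<^sub>R ST s T a \<omega>))
           - (1/2) * qform (I a) (sqrt (real T) *\<^sub>R th a (bq T a \<omega>) (piq T a \<omega>) (vq T a \<omega>)
                                  - matrix_inv (I a) *v ((1 / sqrt (real T)) *\<^sub>R ST s T a \<omega>)))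
      = (Lp T a (bh T a \<omega>) (xh T a \<omega>) \<omega> - L0 T a \<omega>)
        - (1/2 * qform (I a) (Z T a \<omega>) - 1/2 * qform (I a) (lq T a \<omega> - Z T a \<omega>))"
      unfolding Uq by (simp add: Lp_def L0_def xh_def Z_def lq_def lam_def xq_def bs_def ps_def)
    show "\<bar>LpiT p sg q1 y mw piinv T a (bh T a \<omega>)
              (fst (pimap a (phh T a \<omega>, vph T a \<omega>))) (snd (pimap a (phh T a \<omega>, vph T a \<omega>))) \<omega>
         - LpiT p sg q1 y mw piinv T a (bstar sg q1 phs) (phstar sg q1 phs) vzero \<omega>
        - ((1/2) * qform (I a) (matrix_inv (I a) *v ((1 / sqrt (real T)) *\<^sub>R ST s T a \<omega>))
           - (1/2) * qform (I a) (sqrt (real T) *\<^sub>R th a (bq T a \<omega>) (piq T a \<omega>) (vq T a \<omega>)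
                                  - matrix_inv (I a) *v ((1 / sqrt (real T)) *\<^sub>R ST s T a \<omega>)))\<bar>
      \<le> \<bar>e1 T a \<omega>\<bar> + \<bar>e2 T a \<omega>\<bar> + \<bar>Rh T a \<omega>\<bar> + \<bar>Rq T a \<omega>\<bar>"
      unfolding tgt using h1 h2 h3 h4 h5 h6 by linarith
  qed
qed

end
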